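(* Let $d$ be an odd prime and $\Pi^j_k$, $\Omega$ as in the context. For a Hermitian operator $\sigma$ on $\mathbb{C}^d$, define the total quadratic Rényi entropy $$T(\sigma)=-\sum_{j=0}^{d}\log_2\Big(\sum_{k=0}^{d-1}\mathrm{Tr}(\sigma\Pi^j_k)^2\Big)$$ whenever all inner sums are positive. Then: (a) every density operator $\sigma$ (positive semidefinite with unit trace) satisfies $T(\sigma)\ge (d+1)\log_2\!\big(\frac{d+1}{2}\big)$; (b) every $\rho\in\Omega$ satisfies $T(\rho)=(d+1)\log_2\!\big(\frac{d+1}{2}\big)$. In particular, every fiducial state attains this minimum.
   Context: Let $d$ be an odd prime and $\omega=e^{2\pi i/d}$; for real $x$, $\omega^{x}$ means $e^{2\pi i x/d}$. Let $\{|k\rangle\}_{k=0}^{d-1}$ be the computational basis of $\mathbb{C}^d$, with indices taken modulo $d$. Let $X|k\rangle=|k+1\rangle$ and $Z|k\rangle=\omega^k|k\rangle$, and $\tau=-e^{i\pi/d}$. For $\mathbf p=(p_1,p_2)\in\mathbb{Z}_d^2$ set $D_{\mathbf p}=\tau^{p_1p_2}X^{p_1}Z^{p_2}$. For $j\in\{0,\dots,d-1\}$, let $\Pi^j_k$ be the rank-one projector onto the eigenvector of $D_{(1,j)}$ with eigenvalue $\omega^k$. Let $\Pi^d_k=|k\rangle\langle k|$. These $d+1$ bases are mutually unbiased. A unit vector $|\phi\rangle$ is fiducial if $|\langle\phi|D_{\mathbf p}|\phi\rangle|^2=\frac1{d+1}$ for all $\mathbf p\neq(0,0)$. $\Omega$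 denotes the set of all operators $\rho=\sum_{j=0}^{d}\sum_{k=0}^{d-1}\big(p^j_k-\tfrac{1}{d+1}\big)\Pi^j_k$ with $p^j_k=\frac1d+\frac{1}{d\sqrt{d+1}}\sum_{r=1}^{d-1}\omega^{\alpha^j_r+kr}$, where the $\alpha^j_r\in\mathbb{R}$ ($j=0,\dots,d$, $r=1,\dots,d-1$) satisfy $\alpha^j_{d-r}=-\alpha^j_r$. *)

theory Defs
  imports Complex_Main "Jordan_Normal_Form.Matrix"
begin

(* Operators on C^d are d x d complex matrices (Jordan_Normal_Form 'mat'),
   computational basis indexed by 0..d-1, indices modulo d. *)

definition omega :: "nat \<Rightarrow> complex" where
  "omega d = exp (2 * pi * \<i> / of_nat d)"

(* omega^x for real x, i.e. e^{2 pi i x / d} *)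
definition omega_pow :: "nat \<Rightarrow> real \<Rightarrow> complex" where
  "omega_pow d x = exp (2 * pi * \<i> * of_real x / of_nat d)"

definition tau :: "nat \<Rightarrow> complex" where
  "tau d = - exp (pi * \<i> / of_nat d)"

definition Xop :: "nat \<Rightarrow> complex mat" where
  "Xop d = mat d d (\<lambda>(a, b). if a = (b + 1) mod d then 1 else 0)"

definition Zop :: "nat \<Rightarrow> complex mat" where
  "Zop d = mat d d (\<lambda>(a, b). if a = b then omega d ^ a else 0)"

definition Dop :: "nat \<Rightarrow> nat \<Rightarrow> nat \<Rightarrow> complex mat" where
  "Dop d p1 p2 = (tau d ^ (p1 * p2)) \<cdot>\<^sub>m (Xop d ^\<^sub>m p1 * Zop d ^\<^sub>m p2)"

definition vnorm2 :: "complex vec \<Rightarrow> real" where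
  "vnorm2 v = (\<Sum>i<dim_vec v. (cmod (v $ i))\<^sup>2)"

definition outer :: "complex vec \<Rightarrow> complex mat" where
  "outer v = mat (dim_vec v) (dim_vec v) (\<lambda>(a, b). v $ a * cnj (v $ b))"

definition expval :: "complex vec \<Rightarrow> complex mat \<Rightarrow> complex" where
  "expval v M = (\<Sum>a<dim_vec v. \<Sum>b<dim_vec v. cnj (v $ a) * M $$ (a, b) * v $ b)"

(* Pi^j_k: for j < d, the rank-one projector onto the (normalised) eigenvector of
   D_(1,j) with eigenvalue omega^k; for j = d, |k><k| *)
definition mub_proj :: "nat \<Rightarrow> nat \<Rightarrow> nat \<Rightarrow> complex mat" where
  "mub_proj d j k =
     (if j = d then mat d d (\<lambda>(a, b). if a = k \<and> b = k then 1 else 0)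
      else (THE P. \<exists>v \<in> carrier_vec d. vnorm2 v = 1 \<and>
                 Dop d 1 j *\<^sub>v v = (omega d ^ k) \<cdot>\<^sub>v v \<and> P = outer v))"

definition mtrace :: "complex mat \<Rightarrow> complex" where
  "mtrace M = (\<Sum>i<dim_row M. M $$ (i, i))"

definition adjoint_op :: "complex mat \<Rightarrow> complex mat" where
  "adjoint_op M = mat (dim_col M) (dim_row M) (\<lambda>(a, b). cnj (M $$ (b, a)))"

definition hermitian_op :: "nat \<Rightarrow> complex mat \<Rightarrow> bool" where
  "hermitian_op d M \<longleftrightarrow> M \<in> carrier_mat d d \<and> adjoint_op M = M"

definition density_op :: "nat \<Rightarrow> complex mat \<Rightarrow> bool" where
  "density_op d M \<longleftrightarrow> hermitian_op d M
     \<and> (\<forall>v \<in> carrier_vec d. Re (expval v M) \<ge> 0) \<and> mtrace M = 1"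

(* Tr(sigma Pi^j_k); real for Hermitian sigma, so we take the real part *)
definition mub_prob :: "nat \<Rightarrow> complex mat \<Rightarrow> nat \<Rightarrow> nat \<Rightarrow> real" where
  "mub_prob d \<sigma> j k = Re (mtrace (\<sigma> * mub_proj d j k))"

definition purity_sum :: "nat \<Rightarrow> complex mat \<Rightarrow> nat \<Rightarrow> real" where
  "purity_sum d \<sigma> j = (\<Sum>k<d. (mub_prob d \<sigma> j k)\<^sup>2)"

definition T_defined :: "nat \<Rightarrow> complex mat \<Rightarrow> bool" where
  "T_defined d \<sigma> \<longleftrightarrow> (\<forall>j\<le>d. purity_sum d \<sigma> j > 0)"

definition total_renyi :: "nat \<Rightarrow> complex mat \<Rightarrow> real" where
  "total_renyi d \<sigma> = - (\<Sum>j\<le>d. log 2 (purity_sum d \<sigma> j))"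

definition pcoef :: "nat \<Rightarrow> (nat \<Rightarrow> nat \<Rightarrow> real) \<Rightarrow> nat \<Rightarrow> nat \<Rightarrow> complex" where
  "pcoef d \<alpha> j k = 1 / of_nat d + 1 / (of_nat d * of_real (sqrt (of_nat d + 1)))
       * (\<Sum>r\<in>{1..d-1}. omega_pow d (\<alpha> j r + of_nat (k * r)))"

definition Omega :: "nat \<Rightarrow> complex mat set" where
  "Omega d = {\<rho>. \<exists>\<alpha> :: nat \<Rightarrow> nat \<Rightarrow> real.
      (\<forall>j\<le>d. \<forall>r\<in>{1..d-1}. \<alpha> j (d - r) = - \<alpha> j r) \<and>
      \<rho> = mat d d (\<lambda>(a, b). \<Sum>j\<le>d. \<Sum>k<d.
              (pcoef d \<alpha> j k - 1 / (of_nat d + 1)) * mub_proj d j k $$ (a, b))}"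

definition fiducial :: "nat \<Rightarrow> complex vec \<Rightarrow> bool" where
  "fiducial d \<phi> \<longleftrightarrow> \<phi> \<in> carrier_vec d \<and> vnorm2 \<phi> = 1 \<and>
     (\<forall>p1<d. \<forall>p2<d. (p1, p2) \<noteq> (0, 0) \<longrightarrow>
        (cmod (expval \<phi> (Dop d p1 p2)))\<^sup>2 = 1 / (of_nat d + 1))"

end

theory Submission
  imports Defs "HOL-Computational_Algebra.Primes"
begin

definition W :: "nat \<Rightarrow> int \<Rightarrow> complex" where
  "W d n = exp (2 * pi * \<i> * of_int n / of_nat d)"

lemma W_cis: "W d n = cis (2 * pi * of_int n / of_nat d)"
  unfolding W_def cis_conv_exp by (simp add: field_simps)

lemma W_add: "W d (m + n) = W d m * W d n"
  unfolding W_def by (simp add: exp_add[symmetric] add_divide_distrib distrib_left)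

lemma W_zero[simp]: "W d 0 = 1"
  unfolding W_def by simp

lemma W_diff: "W d (m - n) = W d m * cnj (W d n)"
proof -
  have "cnj (W d n) = W d (- n)"
    unfolding W_cis by (simp add: cis_cnj)
  moreover have "W d m = W d (m - n) * W d n" using W_add[of d "m-n" n] by simp
  moreover have "W d n * W d (-n) = 1" using W_add[of d n "-n"] by simp
  ultimately show ?thesis by (metis mult.assoc mult.right_neutral)
qed

lemma W_cnj: "cnj (W d n) = W d (- n)"
  unfolding W_cis by (simp add: cis_cnj)

lemma W_norm[simp]: "cmod (W d n) = 1"
  unfolding W_def by (simp add: norm_exp_eq_Re)

lemma W_mult_cnj[simp]: "W d n * cnj (W d n) = 1"
proof -
  have "W d n * cnj (W d n) = complex_of_real ((cmod (W d n))\<^sup>2)"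
    using complex_norm_square by metis
  thus ?thesis by simp
qed

lemma W_dvd: assumes "d > 0" "int d dvd n" shows "W d n = 1"
proof -
  obtain m where m: "n = int d * m" using assms by (auto elim: dvdE)
  have "2 * pi * \<i> * of_int n / of_nat d = \<i> * (complex_of_real (2 * pi * of_int m))"
    using assms(1) by (simp add: m field_simps)
  hence "W d n = cis (2 * pi * of_int m)" unfolding W_def cis_conv_exp by simp
  also have "\<dots> = 1" by (simp add: complex_eq_iff cos_int_2pin)
  finally show ?thesis .
qed

lemma W_mod: assumes "d > 0" shows "W d (n mod int d) = W d n"
proof -
  have "n = n mod int d + int d * (n div int d)" by simp
  hence "W d n = W d (n mod int d) * W d (int d * (n div int d))" by (metis W_add)
  thus ?thesis using W_dvd[OF assms, of "int d * (n div int d)"] by simp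
qed

lemma W_cong: assumes "d > 0" "m mod int d = n mod int d" shows "W d m = W d n"
  using W_mod[OF assms(1), of m] W_mod[OF assms(1), of n] assms(2) by simp

lemma W_eq_1: assumes "d > 0" "W d n = 1" shows "int d dvd n"
proof -
  have "W d n = cis (2 * pi * of_int n / d)" unfolding W_def cis_conv_exp
    by (simp add: field_simps)
  hence "cos (2 * pi * of_int n / d) = 1" using assms(2)
    by (metis cis.sel(1) one_complex.sel(1))
  then obtain x where x: "2 * pi * of_int n / d = real_of_int x * 2 * pi"
    using cos_one_2pi_int by blast
  hence "real_of_int n = real_of_int x * d" using assms(1) by (simp add: field_simps)
  hence "n = x * int d" by (metis of_int_eq_iff of_int_mult of_int_of_nat_eq)
  thus ?thesis by simp
qed

lemma W_mult_nat: "W d (int k * n) = W d n ^ k"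
  unfolding W_def by (simp add: exp_of_nat_mult[symmetric] field_simps)

lemma W_sum: assumes "d > 0"
  shows "(\<Sum>k<d. W d (int k * n)) = (if int d dvd n then of_nat d else 0)"
proof (cases "int d dvd n")
  case True
  hence "\<And>k. W d (int k * n) = 1" using W_dvd[OF assms] by (simp add: dvd_mult)
  thus ?thesis using True by simp
next
  case False
  hence ne: "W d n \<noteq> 1" using W_eq_1[OF assms] by blast
  have "W d n ^ d = 1" using W_mult_nat[of d d n] W_dvd[OF assms, of "int d * n"] by simp
  hence "(\<Sum>k<d. W d n ^ k) = 0" using ne by (simp add: sum_gp_strict)
  thus ?thesis using False by (simp add: W_mult_nat)
qed

lemma dvd_diff_small: assumes "a < d" "b < d" "int d dvd (int a - int b)" shows "a = b"
proof -
  obtain m where m: "int a - int b = int d * m" using assms(3) by (auto elim: dvdE)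
  have "m = 0"
  proof (rule ccontr)
    assume "m \<noteq> 0"
    hence "m \<ge> 1 \<or> m \<le> -1" by linarith
    thus False
    proof
      assume "m \<ge> 1" hence "int d * m \<ge> int d" using mult_left_mono[of 1 m "int d"] by simp
      thus False using m assms by linarith
    next
      assume "m \<le> -1" hence "int d * m \<le> - int d" using mult_left_mono[of m "-1" "int d"] by simp
      thus False using m assms by linarith
    qed
  qed
  thus ?thesis using m by simp
qed

lemma prime_int_dvd_mult_small:
  assumes "prime d" "\<not> int d dvd c" "a < d" "b < d"
  shows "int d dvd (c * (int a - int b)) \<longleftrightarrow> a = b"
proof -
  have p: "prime (int d)" using assms(1) by simp
  show ?thesis using prime_dvd_mult_iff[OF p] assms dvd_diff_small by auto
qed

lemma W_orth:
  assumes "prime d" "\<not> int d dvd c" "a < d" "b < d"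
  shows "(\<Sum>k<d. W d (int k * (c * (int a - int b)))) = (if a = b then of_nat d else 0)"
proof -
  have d0: "d > 0" using assms(1) prime_gt_0_nat by blast
  show ?thesis using W_sum[OF d0, of "c * (int a - int b)"] prime_int_dvd_mult_small[OF assms]
    by simp
qed

lemma cmod_sq_eq: "complex_of_real ((cmod z)\<^sup>2) = z * cnj z"
  using complex_norm_square by metis

lemma if_mult_zero: "(if P then (a::'a::semiring_0) else 0) * z = (if P then a * z else 0)"
  by simp

lemma parseval:
  fixes x :: "nat \<Rightarrow> complex"
  assumes "prime d" "\<not> int d dvd c"
  shows "(\<Sum>k<d. (cmod (\<Sum>a<d. W d (int k * c * int a) * x a))\<^sup>2) = real d * (\<Sum>a<d. (cmod (x a))\<^sup>2)"
proof -
  have "complex_of_real (\<Sum>k<d. (cmod (\<Sum>a<d. W d (int k * c * int a) * x a))\<^sup>2)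
      = (\<Sum>k<d. (\<Sum>a<d. W d (int k * c * int a) * x a) * cnj (\<Sum>b<d. W d (int k * c * int b) * x b))"
    unfolding of_real_sum by (simp only: cmod_sq_eq)
  also have "\<dots> = (\<Sum>k<d. \<Sum>a<d. \<Sum>b<d. W d (int k * (c * (int a - int b))) * (x a * cnj (x b)))"
  proof (rule sum.cong[OF refl])
    fix k
    have "(\<Sum>a<d. W d (int k * c * int a) * x a) * cnj (\<Sum>b<d. W d (int k * c * int b) * x b)
       = (\<Sum>a<d. \<Sum>b<d. (W d (int k * c * int a) * cnj (W d (int k * c * int b))) * (x a * cnj (x b)))"
      unfolding cnj_sum sum_product complex_cnj_mult by (intro sum.cong refl) (simp only: mult_ac)
    also have "\<dots> = (\<Sum>a<d. \<Sum>b<d. W d (int k * (c * (int a - int b))) * (x a * cnj (x b)))"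
    proof (intro sum.cong refl)
      fix a b
      have "int k * c * int a - int k * c * int b = int k * (c * (int a - int b))"
        by (simp add: algebra_simps)
      thus "W d (int k * c * int a) * cnj (W d (int k * c * int b)) * (x a * cnj (x b)) =
         W d (int k * (c * (int a - int b))) * (x a * cnj (x b))"
        using W_diff[of d "int k * c * int a" "int k * c * int b"] by simp
    qed
    finally show "(\<Sum>a<d. W d (int k * c * int a) * x a) * cnj (\<Sum>b<d. W d (int k * c * int b) * x b)
       = (\<Sum>a<d. \<Sum>b<d. W d (int k * (c * (int a - int b))) * (x a * cnj (x b)))" .
  qed
  also have "\<dots> = (\<Sum>a<d. \<Sum>k<d. \<Sum>b<d. W d (int k * (c * (int a - int b))) * (x a * cnj (x b)))"
    by (rule sum.swap)
  also have "\<dots> = (\<Sum>a<d. \<Sum>b<d. \<Sum>k<d. W d (int k * (c * (int a - int b))) * (x a * cnj (x b)))"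
    by (rule sum.cong[OF refl], rule sum.swap)
  also have "\<dots> = (\<Sum>a<d. \<Sum>b<d. (\<Sum>k<d. W d (int k * (c * (int a - int b)))) * (x a * cnj (x b)))"
    by (simp only: sum_distrib_right)
  also have "\<dots> = (\<Sum>a<d. \<Sum>b<d. (if a = b then of_nat d else 0) * (x a * cnj (x b)))"
    by (intro sum.cong refl, simp add: W_orth[OF assms])
  also have "\<dots> = (\<Sum>a<d. (if a \<in> {..<d} then of_nat d * (x a * cnj (x a)) else 0))"
    by (intro sum.cong refl) (simp add: sum.delta if_mult_zero)
  also have "\<dots> = complex_of_real (real d * (\<Sum>a<d. (cmod (x a))\<^sup>2))"
    unfolding of_real_mult of_real_sum cmod_sq_eq sum_distrib_left by simp
  finally show ?thesis by (simp only: of_real_eq_iff)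
qed

lemma omega_pow_W: "omega d ^ a = W d (int a)"
proof -
  have "omega d = W d 1" unfolding omega_def W_def by simp
  thus ?thesis using W_mult_nat[of d a 1] by simp
qed
lemma W_dvd_eq: assumes "d > 0" "X - Y = int d * Q" shows "W d X = W d Y"
proof -
  have "X = Y + int d * Q" using assms(2) by simp
  hence "W d X = W d (Y + int d * Q)" by simp
  also have "\<dots> = W d Y * W d (int d * Q)" by (rule W_add)
  also have "W d (int d * Q) = 1" using W_dvd[OF assms(1)] by simp
  finally show ?thesis by simp
qed
lemma sum_shift_mod:
  assumes "a < (d::nat)"
  shows "(\<Sum>t<d. g ((a + t) mod d)) = (\<Sum>b<d. g b)"
proof -
  have d0: "d > 0" using assms by simp
  have inj: "inj_on (\<lambda>t. (a + t) mod d) {..<d}"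
  proof (rule inj_onI)
    fix t t' assume t: "t \<in> {..<d}" "t' \<in> {..<d}" and e: "(a + t) mod d = (a + t') mod d"
    have inv: "((a + s) mod d + (d - a)) mod d = s" if "s < d" for s
    proof -
      have "((a + s) mod d + (d - a)) mod d = ((a + s) + (d - a)) mod d" by (simp add: mod_add_left_eq)
      also have "(a + s) + (d - a) = s + d" using assms by linarith
      finally show ?thesis using that by (metis mod_add_self2 mod_less)
    qed
    have "t = ((a + t) mod d + (d - a)) mod d" using inv[of t] t by simp
    also have "\<dots> = ((a + t') mod d + (d - a)) mod d" by (simp only: e)
    also have "\<dots> = t'" using inv[of t'] t by simp
    finally show "t = t'" .
  qed
  have im: "(\<lambda>t. (a + t) mod d) ` {..<d} = {..<d}"
  proof
    show "(\<lambda>t. (a + t) mod d) ` {..<d} \<subseteq> {..<d}" using d0 by auto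
    show "{..<d} \<subseteq> (\<lambda>t. (a + t) mod d) ` {..<d}"
    proof
      fix b assume b: "b \<in> {..<d}"
      have "(a + (b + d - a) mod d) mod d = (a + (b + d - a)) mod d" by (simp add: mod_add_right_eq)
      also have "a + (b + d - a) = b + d" using assms by linarith
      also have "(b + d) mod d = b" using b by simp
      finally have e: "b = (a + (b + d - a) mod d) mod d" by simp
      have "(b + d - a) mod d \<in> {..<d}" using d0 by simp
      with e show "b \<in> (\<lambda>t. (a + t) mod d) ` {..<d}" by blast
    qed
  qed
  have "(\<Sum>b<d. g b) = (\<Sum>b\<in>(\<lambda>t. (a + t) mod d) ` {..<d}. g b)" using im by simp
  also have "\<dots> = (\<Sum>t<d. g ((a + t) mod d))" using sum.reindex[OF inj] by simp
  finally show ?thesis by simp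
qed

lemma tau_W: assumes "odd d" shows "tau d = W d (int ((d + 1) div 2))"
proof -
  obtain m where m: "d = 2 * m + 1" using assms oddE by blast
  have h: "(d + 1) div 2 = m + 1" unfolding m by simp
  have d0: "d > 0" using m by simp
  have "2 * pi * \<i> * of_int (int ((d + 1) div 2)) / of_nat d = \<i> * pi + pi * \<i> / d"
  proof -
    have nz: "(of_nat d::complex) \<noteq> 0" using d0 by simp
    have dd: "(of_nat d::complex) = 2 * of_nat m + 1" unfolding m by simp
    show ?thesis unfolding h using nz by (simp add: field_simps dd)
  qed
  hence "W d (int ((d + 1) div 2)) = exp (\<i> * pi) * exp (pi * \<i> / d)"
    unfolding W_def by (simp add: exp_add)
  also have "\<dots> = tau d" unfolding tau_def using exp_pi_i' by simp
  finally show ?thesis by simp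
qed

lemma Xop_carrier: "Xop d \<in> carrier_mat d d" unfolding Xop_def by simp
lemma Zop_carrier: "Zop d \<in> carrier_mat d d" unfolding Zop_def by simp
lemma Xop_pow: assumes "d > 0"
  shows "Xop d ^\<^sub>m p = mat d d (\<lambda>(a, b). if a = (b + p) mod d then 1 else 0)"
proof (induction p)
  case 0
  show ?case unfolding pow_mat.simps using Xop_carrier[of d]
    by (intro eq_matI) auto
next
  case (Suc p)
  show ?case
  proof (intro eq_matI)
    fix a b assume ab: "a < dim_row (mat d d (\<lambda>(a, b). if a = (b + Suc p) mod d then 1 else 0))"
      "b < dim_col (mat d d (\<lambda>(a, b). if a = (b + Suc p) mod d then 1 else 0))"
    hence a: "a < d" and b: "b < d" by auto
    have "(Xop d ^\<^sub>m Suc p) $$ (a, b) = (\<Sum>c<d. (if a = (c + p) mod d then 1 else 0) * (if c = (b + 1) mod d then 1 else 0))"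
      using a b unfolding pow_mat.simps Suc.IH unfolding Xop_def
      by (simp add: times_mat_def scalar_prod_def atLeast0LessThan row_def col_def)
    also have "\<dots> = (\<Sum>c<d. if c = (b + 1) mod d then (if a = (c + p) mod d then 1 else 0) else 0)"
      by (intro sum.cong refl) auto
    also have "\<dots> = (if a = ((b + 1) mod d + p) mod d then 1 else 0)"
      using assms by (simp add: sum.delta')
    also have "\<dots> = (if a = (b + Suc p) mod d then 1 else 0)"
      by (simp add: mod_add_left_eq)
    finally show "(Xop d ^\<^sub>m Suc p) $$ (a, b) = mat d d (\<lambda>(a, b). if a = (b + Suc p) mod d then 1 else 0) $$ (a, b)"
      using a b by simp
  qed (use Xop_carrier[of d] in auto)
qed

lemma Zop_pow:
  shows "Zop d ^\<^sub>m p = mat d d (\<lambda>(a, b). if a = b then W d (int p * int a) else 0)"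
proof (induction p)
  case 0
  show ?case unfolding pow_mat.simps using Zop_carrier[of d]
    by (intro eq_matI) auto
next
  case (Suc p)
  show ?case
  proof (intro eq_matI)
    fix a b assume ab: "a < dim_row (mat d d (\<lambda>(a, b). if a = b then W d (int (Suc p) * int a) else 0))"
      "b < dim_col (mat d d (\<lambda>(a, b). if a = b then W d (int (Suc p) * int a) else 0))"
    hence a: "a < d" and b: "b < d" by auto
    have "(Zop d ^\<^sub>m Suc p) $$ (a, b) = (\<Sum>c<d. (if a = c then W d (int p * int a) else 0) * (if c = b then W d (int c) else 0))"
      using a b unfolding pow_mat.simps Suc.IH unfolding Zop_def omega_pow_W
      by (simp add: times_mat_def scalar_prod_def atLeast0LessThan row_def col_def)
    also have "\<dots> = (if a = b then W d (int p * int a) * W d (int a) else 0)"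
      using a b by (simp add: sum.delta if_mult_zero)
    also have "\<dots> = (if a = b then W d (int (Suc p) * int a) else 0)"
      by (simp add: W_add[symmetric] algebra_simps)
    finally show "(Zop d ^\<^sub>m Suc p) $$ (a, b) = mat d d (\<lambda>(a, b). if a = b then W d (int (Suc p) * int a) else 0) $$ (a, b)"
      using a b by simp
  qed (use Zop_carrier[of d] in auto)
qed

lemma Dop_carrier: "Dop d p1 p2 \<in> carrier_mat d d"
  unfolding Dop_def
  using mult_carrier_mat[OF pow_carrier_mat[OF Xop_carrier[of d], of p1] pow_carrier_mat[OF Zop_carrier[of d], of p2]]
  by simp

lemma Dop_entry:
  assumes "odd d" "a < d" "b < d"
  shows "Dop d p1 p2 $$ (a, b) = (if a = (b + p1) mod d then W d (int ((d + 1) div 2) * int p1 * int p2 + int p2 * int b) else 0)"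
proof -
  have d0: "d > 0" using assms by simp
  have "(Xop d ^\<^sub>m p1 * Zop d ^\<^sub>m p2) $$ (a, b)
      = (\<Sum>c<d. (if a = (c + p1) mod d then 1 else 0) * (if c = b then W d (int p2 * int c) else 0))"
    using assms unfolding Xop_pow[OF d0] Zop_pow
    by (simp add: times_mat_def scalar_prod_def atLeast0LessThan row_def col_def)
  also have "\<dots> = (\<Sum>c<d. if c = b then (if a = (c + p1) mod d then W d (int p2 * int c) else 0) else 0)"
    by (intro sum.cong refl) auto
  also have "\<dots> = (if a = (b + p1) mod d then W d (int p2 * int b) else 0)"
    using assms by (simp only: sum.delta finite_lessThan lessThan_iff if_True)
  finally have e: "(Xop d ^\<^sub>m p1 * Zop d ^\<^sub>m p2) $$ (a, b) = (if a = (b + p1) mod d then W d (int p2 * int b) else 0)" .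
  have t: "tau d ^ (p1 * p2) = W d (int ((d + 1) div 2) * int p1 * int p2)"
  proof -
    have "int (p1 * p2) * int ((d + 1) div 2) = int ((d + 1) div 2) * int p1 * int p2" by simp
    hence "W d (int ((d + 1) div 2) * int p1 * int p2) = W d (int ((d + 1) div 2)) ^ (p1 * p2)"
      using W_mult_nat[of d "p1 * p2" "int ((d + 1) div 2)"] by metis
    thus ?thesis using tau_W[OF assms(1)] by simp
  qed
  have "Dop d p1 p2 $$ (a, b) = tau d ^ (p1 * p2) * (Xop d ^\<^sub>m p1 * Zop d ^\<^sub>m p2) $$ (a, b)"
    unfolding Dop_def using assms pow_mat_dim_square(1)[OF Xop_carrier[of d], of p1]
      pow_mat_dim_square(2)[OF Zop_carrier[of d], of p2]
    by (simp add: index_smult_mat)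
  also have "\<dots> = (if a = (b + p1) mod d then W d (int ((d + 1) div 2) * int p1 * int p2 + int p2 * int b) else 0)"
    unfolding e t by (simp add: W_add)
  finally show ?thesis .
qed

definition hh :: "nat \<Rightarrow> int" where "hh d = int ((d + 1) div 2)"

definition ev :: "nat \<Rightarrow> nat \<Rightarrow> nat \<Rightarrow> complex vec" where
  "ev d j k = (if j = d then unit_vec d k
     else vec d (\<lambda>a. complex_of_real (1 / sqrt (real d)) * W d (hh d * int j * int a ^ 2 - int k * int a)))"

lemma hh_odd: assumes "odd d" shows "int d = 2 * hh d - 1"
proof -
  obtain m where m: "d = 2 * m + 1" using assms oddE by blast
  show ?thesis unfolding hh_def m by simp
qed

definition pr :: "nat \<Rightarrow> nat \<Rightarrow> nat" where "pr d a = (a + d - 1) mod d"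

lemma suc_mod: assumes "b < d" shows "Suc b mod d = (if Suc b = d then 0 else Suc b)"
proof (cases "Suc b = d")
  case True thus ?thesis by simp
next
  case False hence "Suc b < d" using assms by simp
  thus ?thesis by simp
qed

lemma pr_eq: assumes "a < d" shows "pr d a = (if a = 0 then d - 1 else a - 1)"
proof (cases "a = 0")
  case True thus ?thesis unfolding pr_def using assms by simp
next
  case False
  hence "a + d - 1 = (a - 1) + d" by simp
  hence "pr d a = (a - 1) mod d" unfolding pr_def by simp
  thus ?thesis using False assms by simp
qed

lemma pr_iff: assumes "a < d" "b < d" shows "(a = (b + 1) mod d) = (b = pr d a)"
  unfolding Suc_eq_plus1[symmetric] suc_mod[OF assms(2)] pr_eq[OF assms(1)] using assms by auto

lemma pr_less: "d > 0 \<Longrightarrow> pr d a < d" unfolding pr_def by simp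

lemma pr_int: assumes "a < d" shows "int (pr d a) = int a - 1 + int d * (if a = 0 then 1 else 0)"
  using assms by (simp add: pr_eq)

lemma pr_suc: assumes "Suc a < d" shows "pr d (Suc a) = a"
  unfolding pr_def using assms by simp

lemma Dop_mult_vec:
  assumes "odd d" "v \<in> carrier_vec d" "a < d"
  shows "(Dop d 1 j *\<^sub>v v) $ a = W d (hh d * int j + int j * int (pr d a)) * v $ (pr d a)"
proof -
  have d0: "d > 0" using assms by simp
  have "(Dop d 1 j *\<^sub>v v) $ a = (\<Sum>b<d. Dop d 1 j $$ (a, b) * v $ b)"
    using assms Dop_carrier[of d 1 j]
    by (simp add: mult_mat_vec_def scalar_prod_def atLeast0LessThan row_def)
  also have "\<dots> = (\<Sum>b<d. if b = pr d a then W d (hh d * int j + int j * int b) * v $ b else 0)"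
  proof (intro sum.cong refl)
    fix b assume "b \<in> {..<d}"
    hence b: "b < d" by simp
    show "Dop d 1 j $$ (a, b) * v $ b = (if b = pr d a then W d (hh d * int j + int j * int b) * v $ b else 0)"
      unfolding Dop_entry[OF assms(1) assms(3) b] pr_iff[OF assms(3) b] hh_def by simp
  qed
  also have "\<dots> = W d (hh d * int j + int j * int (pr d a)) * v $ (pr d a)"
    using pr_less[OF d0] by (simp add: sum.delta)
  finally show ?thesis .
qed

definition EE :: "nat \<Rightarrow> nat \<Rightarrow> nat \<Rightarrow> nat \<Rightarrow> int" where
  "EE d j k a = hh d * int j * int a ^ 2 - int k * int a"

lemma ev_carrier: "ev d j k \<in> carrier_vec d"
  unfolding ev_def by auto

lemma dim_ev[simp]: "dim_vec (ev d j k) = d"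
  using ev_carrier carrier_vecD by blast

lemma ev_entry: "j < d \<Longrightarrow> a < d \<Longrightarrow> ev d j k $ a = complex_of_real (1 / sqrt (real d)) * W d (EE d j k a)"
  unfolding ev_def EE_def by simp

lemma ev_entry_d: "a < d \<Longrightarrow> ev d d k $ a = (if a = k then 1 else 0)"
  unfolding ev_def by (simp add: unit_vec_def)

lemma ev_eigen:
  assumes "odd d" "j < d"
  shows "Dop d 1 j *\<^sub>v ev d j k = omega d ^ k \<cdot>\<^sub>v ev d j k"
proof (rule eq_vecI)
  have d0: "d > 0" using assms by simp
  show "dim_vec (Dop d 1 j *\<^sub>v ev d j k) = dim_vec (omega d ^ k \<cdot>\<^sub>v ev d j k)"
    using Dop_carrier[of d 1 j] by simp
  fix a assume "a < dim_vec (omega d ^ k \<cdot>\<^sub>v ev d j k)"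
  hence a: "a < d" by simp
  define c where "c = complex_of_real (1 / sqrt (real d))"
  define e :: int where "e = (if a = 0 then 1 else 0)"
  have pa: "int (pr d a) = int a - 1 + int d * e" using pr_int[OF a] unfolding e_def by simp
  have "(Dop d 1 j *\<^sub>v ev d j k) $ a = W d (hh d * int j + int j * int (pr d a)) * (c * W d (EE d j k (pr d a)))"
    using Dop_mult_vec[OF assms(1) ev_carrier a] ev_entry[OF assms(2) pr_less[OF d0]] c_def by simp
  also have "\<dots> = c * W d (hh d * int j + int j * int (pr d a) + EE d j k (pr d a))"
    by (simp add: W_add)
  also have "W d (hh d * int j + int j * int (pr d a) + EE d j k (pr d a)) = W d (int k + EE d j k a)"
  proof (rule W_dvd_eq[OF d0])
    let ?h = "hh d"
    show "hh d * int j + int j * int (pr d a) + EE d j k (pr d a) - (int k + EE d j k a)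
        = int d * (int j * (1 - int a) + e * (int j + 2 * ?h * int j * (int a - 1) + ?h * int j * int d * e - int k))"
      unfolding EE_def pa hh_odd[OF assms(1)] by (simp add: algebra_simps power2_eq_square)
  qed
  also have "c * W d (int k + EE d j k a) = omega d ^ k * (c * W d (EE d j k a))"
    by (simp add: W_add omega_pow_W)
  also have "\<dots> = (omega d ^ k \<cdot>\<^sub>v ev d j k) $ a"
    using ev_entry[OF assms(2) a] a c_def by simp
  finally show "(Dop d 1 j *\<^sub>v ev d j k) $ a = (omega d ^ k \<cdot>\<^sub>v ev d j k) $ a" .
qed

lemma csqrt_sq: "(complex_of_real (sqrt (real d)))\<^sup>2 = of_nat d"
  by (simp flip: of_real_power)

lemma csqrt_mul: "complex_of_real (sqrt (real d)) * complex_of_real (sqrt (real d)) = of_nat d"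
  by (simp flip: of_real_mult)

lemma vnorm2_ev: assumes "j \<le> d" "k < d" shows "vnorm2 (ev d j k) = 1"
proof (cases "j = d")
  case True
  have "vnorm2 (ev d j k) = (\<Sum>a<d. (cmod (if a = k then 1 else 0))\<^sup>2)"
    unfolding vnorm2_def True using ev_entry_d by (intro sum.cong) auto
  also have "\<dots> = (\<Sum>a<d. if a = k then 1 else 0)" by (intro sum.cong) auto
  also have "\<dots> = 1" using assms by simp
  finally show ?thesis .
next
  case False
  hence j: "j < d" using assms by simp
  have d0: "d > 0" using assms by simp
  have "vnorm2 (ev d j k) = (\<Sum>a<d. (cmod (complex_of_real (1 / sqrt (real d)) * W d (EE d j k a)))\<^sup>2)"
    unfolding vnorm2_def using ev_entry[OF j] by (intro sum.cong) auto
  also have "\<dots> = (\<Sum>a<d. 1 / real d)"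
    by (intro sum.cong refl) (simp add: norm_mult norm_divide power_divide)
  also have "\<dots> = 1" using d0 by simp
  finally show ?thesis .
qed

lemma eigen_rec:
  assumes "odd d" "j < d" "v \<in> carrier_vec d" "Dop d 1 j *\<^sub>v v = omega d ^ k \<cdot>\<^sub>v v" "a < d"
  shows "v $ a = v $ 0 * W d (EE d j k a)"
  using assms(5)
proof (induction a)
  case 0 thus ?case unfolding EE_def by simp
next
  case (Suc a)
  have d0: "d > 0" using assms by simp
  have a: "a < d" using Suc by simp
  have "(Dop d 1 j *\<^sub>v v) $ Suc a = W d (hh d * int j + int j * int a) * v $ a"
    using Dop_mult_vec[OF assms(1) assms(3) Suc.prems] pr_suc[OF Suc.prems] by simp
  moreover have "(Dop d 1 j *\<^sub>v v) $ Suc a = W d (int k) * v $ Suc a"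
    using assms(4) Suc.prems assms(3) by (simp add: omega_pow_W)
  ultimately have "W d (int k) * v $ Suc a = W d (hh d * int j + int j * int a) * v $ a" by simp
  hence "cnj (W d (int k)) * (W d (int k) * v $ Suc a) = cnj (W d (int k)) * (W d (hh d * int j + int j * int a) * v $ a)"
    by simp
  hence "v $ Suc a = (W d (hh d * int j + int j * int a) * cnj (W d (int k))) * v $ a"
    by (simp add: mult.assoc[symmetric] mult.commute[of "cnj _"])
  also have "\<dots> = W d (hh d * int j + int j * int a - int k) * (v $ 0 * W d (EE d j k a))"
    using Suc.IH[OF a] W_diff by simp
  also have "\<dots> = v $ 0 * W d (hh d * int j + int j * int a - int k + EE d j k a)"
    by (simp add: W_add)
  also have "W d (hh d * int j + int j * int a - int k + EE d j k a) = W d (EE d j k (Suc a))"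
  proof (rule W_dvd_eq[OF d0])
    show "hh d * int j + int j * int a - int k + EE d j k a - EE d j k (Suc a) = int d * (- int j * int a)"
      unfolding EE_def hh_odd[OF assms(1)] by (simp add: algebra_simps power2_eq_square)
  qed
  finally show ?case .
qed

lemma eigen_unique:
  assumes "odd d" "j < d" "v \<in> carrier_vec d" "vnorm2 v = 1" "Dop d 1 j *\<^sub>v v = omega d ^ k \<cdot>\<^sub>v v"
  shows "outer v = outer (ev d j k)"
proof -
  have d0: "d > 0" using assms by simp
  have dv: "dim_vec v = d" using assms(3) by simp
  have rec: "\<And>a. a < d \<Longrightarrow> v $ a = v $ 0 * W d (EE d j k a)" using eigen_rec[OF assms(1,2,3,5)] .
  have "1 = (\<Sum>a<d. (cmod (v $ 0 * W d (EE d j k a)))\<^sup>2)"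
    using assms(4) unfolding vnorm2_def dv by (metis (no_types, lifting) lessThan_iff rec sum.cong)
  also have "\<dots> = real d * (cmod (v $ 0))\<^sup>2" by (simp add: norm_mult)
  finally have n: "(cmod (v $ 0))\<^sup>2 = 1 / real d" using d0 by (simp add: field_simps)
  show ?thesis
  proof (rule eq_matI)
    show "dim_row (outer v) = dim_row (outer (ev d j k))" unfolding outer_def dv by simp
    show "dim_col (outer v) = dim_col (outer (ev d j k))" unfolding outer_def dv by simp
    fix a b assume "a < dim_row (outer (ev d j k))" "b < dim_col (outer (ev d j k))"
    hence a: "a < d" and b: "b < d" unfolding outer_def by auto
    have "outer v $$ (a, b) = (v $ 0 * cnj (v $ 0)) * (W d (EE d j k a) * cnj (W d (EE d j k b)))"
      unfolding outer_def dv using a b rec[OF a] rec[OF b] by (simp add: algebra_simps)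
    also have "v $ 0 * cnj (v $ 0) = complex_of_real (1 / real d)" using n cmod_sq_eq by metis
    also have "complex_of_real (1 / real d) * (W d (EE d j k a) * cnj (W d (EE d j k b)))
        = outer (ev d j k) $$ (a, b)"
      unfolding outer_def using a b ev_entry[OF assms(2)] d0
      by (simp add: algebra_simps csqrt_mul)
    finally show "outer v $$ (a, b) = outer (ev d j k) $$ (a, b)" .
  qed
qed

lemma outer_unit: "k < d \<Longrightarrow> outer (ev d d k) = mat d d (\<lambda>(a, b). if a = k \<and> b = k then 1 else 0)"
  by (intro eq_matI) (auto simp: outer_def ev_entry_d)

lemma mub_proj_ev:
  assumes "odd d" "j \<le> d" "k < d"
  shows "mub_proj d j k = outer (ev d j k)"
proof (cases "j = d")
  case True thus ?thesis unfolding mub_proj_def using outer_unit[OF assms(3)] by simp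
next
  case False
  hence j: "j < d" using assms by simp
  have "(THE P. \<exists>v \<in> carrier_vec d. vnorm2 v = 1 \<and>
                 Dop d 1 j *\<^sub>v v = (omega d ^ k) \<cdot>\<^sub>v v \<and> P = outer v) = outer (ev d j k)"
  proof (rule the_equality)
    show "\<exists>v \<in> carrier_vec d. vnorm2 v = 1 \<and> Dop d 1 j *\<^sub>v v = (omega d ^ k) \<cdot>\<^sub>v v \<and> outer (ev d j k) = outer v"
      using ev_carrier vnorm2_ev[OF assms(2,3)] ev_eigen[OF assms(1) j] by blast
    fix P assume "\<exists>v \<in> carrier_vec d. vnorm2 v = 1 \<and> Dop d 1 j *\<^sub>v v = (omega d ^ k) \<cdot>\<^sub>v v \<and> P = outer v"
    thus "P = outer (ev d j k)" using eigen_unique[OF assms(1) j] by blast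
  qed
  thus ?thesis unfolding mub_proj_def using False by simp
qed

definition QQ :: "nat \<Rightarrow> complex mat \<Rightarrow> nat \<Rightarrow> nat \<Rightarrow> complex" where
  "QQ d \<sigma> j k = (\<Sum>a<d. \<Sum>b<d. \<sigma> $$ (a, b) * ev d j k $ b * cnj (ev d j k $ a))"

definition SS :: "nat \<Rightarrow> complex mat \<Rightarrow> nat \<Rightarrow> nat \<Rightarrow> complex" where
  "SS d \<sigma> j t = (\<Sum>a<d. W d (hh d * int j * (2 * int a * int t + int t ^ 2)) * \<sigma> $$ (a, (a + t) mod d))"

lemma mtrace_mult_outer:
  assumes "\<sigma> \<in> carrier_mat d d" "v \<in> carrier_vec d"
  shows "mtrace (\<sigma> * outer v) = (\<Sum>a<d. \<Sum>b<d. \<sigma> $$ (a, b) * v $ b * cnj (v $ a))"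
proof -
  have dv: "dim_vec v = d" using assms by simp
  have o: "outer v \<in> carrier_mat d d" unfolding outer_def dv by simp
  have "mtrace (\<sigma> * outer v) = (\<Sum>a<d. (\<sigma> * outer v) $$ (a, a))"
    unfolding mtrace_def using assms(1) by simp
  also have "\<dots> = (\<Sum>a<d. \<Sum>b<d. \<sigma> $$ (a, b) * v $ b * cnj (v $ a))"
  proof (rule sum.cong[OF refl])
    fix a assume "a \<in> {..<d}"
    hence a: "a < d" by simp
    have "(\<sigma> * outer v) $$ (a, a) = row \<sigma> a \<bullet> col (outer v) a"
      using assms(1) o a by (simp add: index_mult_mat)
    also have "\<dots> = (\<Sum>b<d. \<sigma> $$ (a, b) * (outer v $$ (b, a)))"
      unfolding scalar_prod_def using assms(1) o a by (simp add: atLeast0LessThan)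
    also have "\<dots> = (\<Sum>b<d. \<sigma> $$ (a, b) * v $ b * cnj (v $ a))"
      using a by (intro sum.cong refl) (simp add: outer_def dv mult.assoc)
    finally show "(\<sigma> * outer v) $$ (a, a) = (\<Sum>b<d. \<sigma> $$ (a, b) * v $ b * cnj (v $ a))" .
  qed
  finally show ?thesis .
qed

lemma mub_prob_QQ:
  assumes "odd d" "\<sigma> \<in> carrier_mat d d" "j \<le> d" "k < d"
  shows "mub_prob d \<sigma> j k = Re (QQ d \<sigma> j k)"
  unfolding mub_prob_def mub_proj_ev[OF assms(1,3,4)] mtrace_mult_outer[OF assms(2) ev_carrier] QQ_def ..

lemma Re_sq_real: "cnj z = z \<Longrightarrow> (Re z)\<^sup>2 = (cmod z)\<^sup>2"
proof -
  assume "cnj z = z"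
  hence "Im z = 0" by (simp add: complex_eq_iff)
  thus ?thesis by (simp add: cmod_power2)
qed

lemma QQ_real:
  assumes "\<And>a b. a < d \<Longrightarrow> b < d \<Longrightarrow> \<sigma> $$ (b, a) = cnj (\<sigma> $$ (a, b))"
  shows "cnj (QQ d \<sigma> j k) = QQ d \<sigma> j k"
proof -
  have "cnj (QQ d \<sigma> j k) = (\<Sum>a<d. \<Sum>b<d. \<sigma> $$ (b, a) * ev d j k $ a * cnj (ev d j k $ b))"
    unfolding QQ_def cnj_sum
  proof (intro sum.cong refl)
    fix a b assume ab: "a \<in> {..<d}" "b \<in> {..<d}"
    have "\<sigma> $$ (b, a) = cnj (\<sigma> $$ (a, b))" using assms ab by blast
    thus "cnj (\<sigma> $$ (a, b) * ev d j k $ b * cnj (ev d j k $ a)) = \<sigma> $$ (b, a) * ev d j k $ a * cnj (ev d j k $ b)"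
      by (simp only: complex_cnj_mult complex_cnj_cnj mult_ac)
  qed
  also have "\<dots> = QQ d \<sigma> j k" unfolding QQ_def by (rule sum.swap)
  finally show ?thesis .
qed

lemma QQ_d: assumes "k < d" shows "QQ d \<sigma> d k = \<sigma> $$ (k, k)"
proof -
  have "QQ d \<sigma> d k = (\<Sum>a<d. \<Sum>b<d. if a = k \<and> b = k then \<sigma> $$ (a, b) else 0)"
    unfolding QQ_def by (intro sum.cong refl) (simp add: ev_entry_d)
  also have "\<dots> = (\<Sum>a<d. if a = k then \<sigma> $$ (a, k) else 0)"
    by (intro sum.cong refl) (simp add: sum.delta)
  also have "\<dots> = \<sigma> $$ (k, k)" using assms by (simp add: sum.delta)
  finally show ?thesis .
qed

lemma EE_shift:
  assumes "d > 0"
  shows "W d (EE d j k ((a + t) mod d) - EE d j k a) = W d (int k * (-1) * int t) * W d (hh d * int j * (2 * int a * int t + int t ^ 2))"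
proof -
  define q where "q = int ((a + t) div d)"
  have m: "int ((a + t) mod d) = int a + int t - int d * q"
  proof -
    have "a + t = (a + t) mod d + d * ((a + t) div d)" by simp
    hence "int (a + t) = int ((a + t) mod d) + int d * q" unfolding q_def by (metis of_nat_add of_nat_mult)
    thus ?thesis by simp
  qed
  have "W d (EE d j k ((a + t) mod d) - EE d j k a) = W d (int k * (-1) * int t + hh d * int j * (2 * int a * int t + int t ^ 2))"
  proof (rule W_dvd_eq[OF assms])
    show "EE d j k ((a + t) mod d) - EE d j k a - (int k * (-1) * int t + hh d * int j * (2 * int a * int t + int t ^ 2))
      = int d * (hh d * int j * (- 2 * (int a + int t) * q + int d * q * q) + int k * q)"
      unfolding EE_def m by (simp add: algebra_simps power2_eq_square)
  qed
  also have "\<dots> = W d (int k * (-1) * int t) * W d (hh d * int j * (2 * int a * int t + int t ^ 2))"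
    by (rule W_add)
  finally show ?thesis .
qed

lemma QQ_fourier:
  assumes "d > 0" "j < d"
  shows "QQ d \<sigma> j k = complex_of_real (1 / real d) * (\<Sum>t<d. W d (int k * (-1) * int t) * SS d \<sigma> j t)"
proof -
  define c where "c = complex_of_real (1 / sqrt (real d))"
  have cc: "c * cnj c = complex_of_real (1 / real d)"
    unfolding c_def using assms(1) by (simp flip: of_real_mult add: real_sqrt_mult[symmetric])
  have "QQ d \<sigma> j k = (\<Sum>a<d. \<Sum>b<d. complex_of_real (1 / real d) * (\<sigma> $$ (a, b) * W d (EE d j k b - EE d j k a)))"
    unfolding QQ_def
  proof (intro sum.cong refl)
    fix a b assume "a \<in> {..<d}" "b \<in> {..<d}"
    hence a: "a < d" and b: "b < d" by auto
    have "\<sigma> $$ (a, b) * ev d j k $ b * cnj (ev d j k $ a)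
        = (c * cnj c) * (\<sigma> $$ (a, b) * (W d (EE d j k b) * cnj (W d (EE d j k a))))"
      unfolding ev_entry[OF assms(2) a] ev_entry[OF assms(2) b] c_def by (simp add: mult_ac)
    thus "\<sigma> $$ (a, b) * ev d j k $ b * cnj (ev d j k $ a) =
          complex_of_real (1 / real d) * (\<sigma> $$ (a, b) * W d (EE d j k b - EE d j k a))"
      unfolding cc W_diff .
  qed
  also have "\<dots> = (\<Sum>a<d. \<Sum>t<d. complex_of_real (1 / real d) * (\<sigma> $$ (a, (a + t) mod d) * W d (EE d j k ((a + t) mod d) - EE d j k a)))"
  proof (rule sum.cong[OF refl])
    fix a assume "a \<in> {..<d}"
    thus "(\<Sum>b<d. complex_of_real (1 / real d) * (\<sigma> $$ (a, b) * W d (EE d j k b - EE d j k a))) =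
      (\<Sum>t<d. complex_of_real (1 / real d) * (\<sigma> $$ (a, (a + t) mod d) * W d (EE d j k ((a + t) mod d) - EE d j k a)))"
      using sum_shift_mod[of a d "\<lambda>b. complex_of_real (1 / real d) * (\<sigma> $$ (a, b) * W d (EE d j k b - EE d j k a))"]
      by simp
  qed
  also have "\<dots> = (\<Sum>a<d. \<Sum>t<d. complex_of_real (1 / real d) * (W d (int k * (-1) * int t) *
       (W d (hh d * int j * (2 * int a * int t + int t ^ 2)) * \<sigma> $$ (a, (a + t) mod d))))"
    by (intro sum.cong refl) (simp only: EE_shift[OF assms(1)] mult_ac)
  also have "\<dots> = (\<Sum>t<d. \<Sum>a<d. complex_of_real (1 / real d) * (W d (int k * (-1) * int t) *
       (W d (hh d * int j * (2 * int a * int t + int t ^ 2)) * \<sigma> $$ (a, (a + t) mod d))))"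
    by (rule sum.swap)
  also have "\<dots> = complex_of_real (1 / real d) * (\<Sum>t<d. W d (int k * (-1) * int t) * SS d \<sigma> j t)"
    unfolding SS_def by (simp only: sum_distrib_left)
  finally show ?thesis .
qed

lemma prime_not_dvd_m1: "prime d \<Longrightarrow> \<not> int d dvd (-1)"
  using prime_gt_1_nat by fastforce

lemma QQ_parseval:
  assumes "prime d" "j < d"
  shows "(\<Sum>k<d. (cmod (QQ d \<sigma> j k))\<^sup>2) = (1 / real d) * (\<Sum>t<d. (cmod (SS d \<sigma> j t))\<^sup>2)"
proof -
  have d0: "d > 0" using assms prime_gt_0_nat by blast
  have "(\<Sum>k<d. (cmod (QQ d \<sigma> j k))\<^sup>2) = (\<Sum>k<d. (1 / real d)\<^sup>2 * (cmod (\<Sum>t<d. W d (int k * (-1) * int t) * SS d \<sigma> j t))\<^sup>2)"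
    unfolding QQ_fourier[OF d0 assms(2)] by (simp add: norm_divide power_divide)
  also have "\<dots> = (1 / real d)\<^sup>2 * (real d * (\<Sum>t<d. (cmod (SS d \<sigma> j t))\<^sup>2))"
    unfolding sum_distrib_left[symmetric] parseval[OF assms(1) prime_not_dvd_m1[OF assms(1)]] ..
  also have "\<dots> = (1 / real d) * (\<Sum>t<d. (cmod (SS d \<sigma> j t))\<^sup>2)"
    using d0 by (simp add: power2_eq_square)
  finally show ?thesis .
qed

lemma SS_zero: "SS d \<sigma> j 0 = (\<Sum>a<d. \<sigma> $$ (a, a))"
  unfolding SS_def by (intro sum.cong refl) simp

lemma SS_abs:
  assumes "odd d"
  shows "cmod (SS d \<sigma> j t) = cmod (\<Sum>a<d. W d (int j * int t * int a) * \<sigma> $$ (a, (a + t) mod d))"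
proof -
  have d0: "d > 0" using assms odd_pos by blast
  have e: "W d (hh d * int j * (2 * int a * int t + int t ^ 2)) = W d (hh d * int j * int t ^ 2) * W d (int j * int t * int a)" for a
  proof -
    have "W d (hh d * int j * (2 * int a * int t + int t ^ 2)) = W d (hh d * int j * int t ^ 2 + int j * int t * int a)"
    proof (rule W_dvd_eq[OF d0])
      show "hh d * int j * (2 * int a * int t + int t ^ 2) - (hh d * int j * int t ^ 2 + int j * int t * int a)
         = int d * (int j * int t * int a)"
        unfolding hh_odd[OF assms] by (simp add: algebra_simps)
    qed
    also have "\<dots> = W d (hh d * int j * int t ^ 2) * W d (int j * int t * int a)" by (rule W_add)
    finally show ?thesis .
  qed
  have "SS d \<sigma> j t = W d (hh d * int j * int t ^ 2) * (\<Sum>a<d. W d (int j * int t * int a) * \<sigma> $$ (a, (a + t) mod d))"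
    unfolding SS_def e by (simp add: sum_distrib_left mult.assoc)
  thus ?thesis by (simp add: norm_mult)
qed

lemma SS_sum_j:
  assumes "prime d" "odd d" "0 < t" "t < d"
  shows "(\<Sum>j<d. (cmod (SS d \<sigma> j t))\<^sup>2) = real d * (\<Sum>a<d. (cmod (\<sigma> $$ (a, (a + t) mod d)))\<^sup>2)"
proof -
  have nd: "\<not> int d dvd int t" using assms by (auto dest: dvd_imp_le)
  show ?thesis unfolding SS_abs[OF assms(2)]
    using parseval[OF assms(1) nd, of "\<lambda>a. \<sigma> $$ (a, (a + t) mod d)"] by simp
qed

lemma sum_shift_sq:
  assumes "d > 0"
  shows "(\<Sum>t<d. \<Sum>a<d. (cmod (\<sigma> $$ (a, (a + t) mod d)))\<^sup>2) = (\<Sum>a<d. \<Sum>b<d. (cmod (\<sigma> $$ (a, b)))\<^sup>2)"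
proof -
  have "(\<Sum>t<d. \<Sum>a<d. (cmod (\<sigma> $$ (a, (a + t) mod d)))\<^sup>2) = (\<Sum>a<d. \<Sum>t<d. (cmod (\<sigma> $$ (a, (a + t) mod d)))\<^sup>2)"
    by (rule sum.swap)
  also have "\<dots> = (\<Sum>a<d. \<Sum>b<d. (cmod (\<sigma> $$ (a, b)))\<^sup>2)"
  proof (rule sum.cong[OF refl])
    fix a assume "a \<in> {..<d}"
    thus "(\<Sum>t<d. (cmod (\<sigma> $$ (a, (a + t) mod d)))\<^sup>2) = (\<Sum>b<d. (cmod (\<sigma> $$ (a, b)))\<^sup>2)"
      using sum_shift_mod[of a d "\<lambda>b. (cmod (\<sigma> $$ (a, b)))\<^sup>2"] by simp
  qed
  finally show ?thesis .
qed

lemma sum_j_QQ: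
  assumes "prime d" "odd d"
  shows "(\<Sum>j<d. \<Sum>k<d. (cmod (QQ d \<sigma> j k))\<^sup>2) =
     (cmod (\<Sum>a<d. \<sigma> $$ (a, a)))\<^sup>2 + (\<Sum>a<d. \<Sum>b<d. (cmod (\<sigma> $$ (a, b)))\<^sup>2) - (\<Sum>a<d. (cmod (\<sigma> $$ (a, a)))\<^sup>2)"
proof -
  have d0: "d > 0" using assms odd_pos by blast
  let ?tr = "(cmod (\<Sum>a<d. \<sigma> $$ (a, a)))\<^sup>2"
  let ?r = "\<lambda>t. (\<Sum>a<d. (cmod (\<sigma> $$ (a, (a + t) mod d)))\<^sup>2)"
  have "(\<Sum>j<d. \<Sum>k<d. (cmod (QQ d \<sigma> j k))\<^sup>2) = (\<Sum>j<d. (1 / real d) * (\<Sum>t<d. (cmod (SS d \<sigma> j t))\<^sup>2))"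
    using QQ_parseval[OF assms(1)] by simp
  also have "\<dots> = (1 / real d) * (\<Sum>t<d. \<Sum>j<d. (cmod (SS d \<sigma> j t))\<^sup>2)"
    unfolding sum_distrib_left[symmetric] by (rule arg_cong[where f = "\<lambda>x. (1 / real d) * x"], rule sum.swap)
  also have "(\<Sum>t<d. \<Sum>j<d. (cmod (SS d \<sigma> j t))\<^sup>2) = (\<Sum>t<d. real d * ?r t + (if t = 0 then real d * ?tr - real d * ?r 0 else 0))"
  proof (rule sum.cong[OF refl])
    fix t assume t: "t \<in> {..<d}"
    show "(\<Sum>j<d. (cmod (SS d \<sigma> j t))\<^sup>2) = real d * ?r t + (if t = 0 then real d * ?tr - real d * ?r 0 else 0)"
    proof (cases "t = 0")
      case True thus ?thesis by (simp only: SS_zero) simp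
    next
      case False thus ?thesis using SS_sum_j[OF assms, of t \<sigma>] t by simp
    qed
  qed
  also have "\<dots> = real d * (\<Sum>t<d. ?r t) + (real d * ?tr - real d * ?r 0)"
    using d0 by (simp add: sum.distrib sum_distrib_left)
  finally have X: "(\<Sum>j<d. \<Sum>k<d. (cmod (QQ d \<sigma> j k))\<^sup>2) = 1 / real d * (real d * (\<Sum>t<d. ?r t) + (real d * ?tr - real d * ?r 0))" .
  have gen: "X = 1 / real d * (real d * A + (real d * B - real d * C)) \<Longrightarrow> X = A + B - C" for X A B C
  proof -
    assume X: "X = 1 / real d * (real d * A + (real d * B - real d * C))"
    have "real d * A + (real d * B - real d * C) = real d * (A + B - C)" by (simp add: algebra_simps)
    with X have "X = 1 / real d * (real d * (A + B - C))" by simp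
    thus ?thesis using d0 by simp
  qed
  have "(\<Sum>j<d. \<Sum>k<d. (cmod (QQ d \<sigma> j k))\<^sup>2) = (\<Sum>t<d. ?r t) + ?tr - ?r 0"
    by (rule gen[OF X])
  moreover have "?r 0 = (\<Sum>a<d. (cmod (\<sigma> $$ (a, a)))\<^sup>2)" by (intro sum.cong refl) simp
  ultimately show ?thesis using sum_shift_sq[OF d0, of \<sigma>] by simp
qed

lemma ite_prod: "(if P then (u::complex) else 0) * s * (if Q then v else 0) = (if Q then (if P then u * s * v else 0) else 0)"
  by simp

lemma expval_two:
  assumes "\<sigma> \<in> carrier_mat d d" "a < d" "b < d" "a \<noteq> b"
  shows "expval (vec d (\<lambda>i. if i = a then x else if i = b then y else 0)) \<sigma>
       = cnj x * x * \<sigma> $$ (a, a) + cnj x * y * \<sigma> $$ (a, b) + cnj y * x * \<sigma> $$ (b, a) + cnj y * y * \<sigma> $$ (b, b)"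
proof -
  define f where "f = (\<lambda>i. if i = a then x else if i = b then y else (0::complex))"
  have f: "f i = (if i = a then x else 0) + (if i = b then y else 0)" for i
    unfolding f_def using assms by auto
  have "expval (vec d f) \<sigma> = (\<Sum>i<d. \<Sum>l<d. cnj (f i) * \<sigma> $$ (i, l) * f l)"
    unfolding expval_def by simp
  also have "\<dots> = (\<Sum>i<d. \<Sum>l<d.
        (if i = a then cnj x else 0) * \<sigma> $$ (i, l) * (if l = a then x else 0)
      + (if i = a then cnj x else 0) * \<sigma> $$ (i, l) * (if l = b then y else 0)
      + (if i = b then cnj y else 0) * \<sigma> $$ (i, l) * (if l = a then x else 0)
      + (if i = b then cnj y else 0) * \<sigma> $$ (i, l) * (if l = b then y else 0))"
    by (intro sum.cong refl) (simp add: f algebra_simps)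
  also have "\<dots> = cnj x * x * \<sigma> $$ (a, a) + cnj x * y * \<sigma> $$ (a, b) + cnj y * x * \<sigma> $$ (b, a) + cnj y * y * \<sigma> $$ (b, b)"
    using assms by (simp only: ite_prod sum.distrib) (simp add: sum.delta)
  finally show ?thesis unfolding f_def .
qed

locale psd_ctx =
  fixes d :: nat and \<sigma> :: "complex mat"
  assumes car: "\<sigma> \<in> carrier_mat d d"
    and herm: "\<And>a b. a < d \<Longrightarrow> b < d \<Longrightarrow> \<sigma> $$ (b, a) = cnj (\<sigma> $$ (a, b))"
    and psd: "\<And>v. v \<in> carrier_vec d \<Longrightarrow> Re (expval v \<sigma>) \<ge> 0"
begin

lemma diag_nonneg: assumes "a < d" "b < d" "a \<noteq> b" shows "Re (\<sigma> $$ (a, a)) \<ge> 0"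
  using psd[of "vec d (\<lambda>i. if i = a then 1 else if i = b then 0 else 0)"] expval_two[OF car assms, of 1 0]
  by simp

lemma diag_real: assumes "a < d" shows "cnj (\<sigma> $$ (a, a)) = \<sigma> $$ (a, a)"
  using herm[OF assms assms] by simp

lemma quad:
  assumes "a < d" "b < d" "a \<noteq> b"
  shows "t\<^sup>2 * Re (\<sigma> $$ (a, a)) - 2 * t * (cmod (\<sigma> $$ (a, b)))\<^sup>2 + (cmod (\<sigma> $$ (a, b)))\<^sup>2 * Re (\<sigma> $$ (b, b)) \<ge> 0"
proof -
  define s where "s = \<sigma> $$ (a, b)"
  define s2 where "s2 = (cmod s)\<^sup>2"
  have ss: "s * cnj s = complex_of_real s2" unfolding s2_def using cmod_sq_eq[of s] by simp
  have ba: "\<sigma> $$ (b, a) = cnj s" unfolding s_def using herm[OF assms(1,2)] .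
  have "expval (vec d (\<lambda>i. if i = a then complex_of_real t else if i = b then - cnj s else 0)) \<sigma>
      = complex_of_real (t\<^sup>2) * \<sigma> $$ (a, a) - complex_of_real (2 * t * s2) + complex_of_real s2 * \<sigma> $$ (b, b)"
  proof -
    have "expval (vec d (\<lambda>i. if i = a then complex_of_real t else if i = b then - cnj s else 0)) \<sigma>
      = cnj (complex_of_real t) * complex_of_real t * \<sigma> $$ (a, a) + cnj (complex_of_real t) * (- cnj s) * s
        + cnj (- cnj s) * complex_of_real t * cnj s + cnj (- cnj s) * (- cnj s) * \<sigma> $$ (b, b)"
      using expval_two[OF car assms] ba s_def by simp
    also have "\<dots> = complex_of_real (t\<^sup>2) * \<sigma> $$ (a, a) - complex_of_real t * (s * cnj s) - complex_of_real t * (s * cnj s)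
        + (s * cnj s) * \<sigma> $$ (b, b)"
      by (simp add: algebra_simps power2_eq_square)
    also have "\<dots> = complex_of_real (t\<^sup>2) * \<sigma> $$ (a, a) - complex_of_real (2 * t * s2) + complex_of_real s2 * \<sigma> $$ (b, b)"
      unfolding ss by (simp add: algebra_simps)
    finally show ?thesis .
  qed
  note E = this
  have R: "Re (complex_of_real (t\<^sup>2) * \<sigma> $$ (a, a) - complex_of_real (2 * t * s2) + complex_of_real s2 * \<sigma> $$ (b, b))
      = t\<^sup>2 * Re (\<sigma> $$ (a, a)) - 2 * t * s2 + s2 * Re (\<sigma> $$ (b, b))" by simp
  have "Re (expval (vec d (\<lambda>i. if i = a then complex_of_real t else if i = b then - cnj s else 0)) \<sigma>) \<ge> 0"
    by (rule psd) simp
  hence "t\<^sup>2 * Re (\<sigma> $$ (a, a)) - 2 * t * s2 + s2 * Re (\<sigma> $$ (b, b)) \<ge> 0" unfolding E R .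
  thus ?thesis unfolding s2_def s_def .
qed

lemma offdiag_bound:
  assumes "a < d" "b < d" "a \<noteq> b"
  shows "(cmod (\<sigma> $$ (a, b)))\<^sup>2 \<le> Re (\<sigma> $$ (a, a)) * Re (\<sigma> $$ (b, b))"
proof -
  define A where "A = Re (\<sigma> $$ (a, a))"
  define B where "B = Re (\<sigma> $$ (b, b))"
  define s2 where "s2 = (cmod (\<sigma> $$ (a, b)))\<^sup>2"
  have A0: "A \<ge> 0" unfolding A_def using diag_nonneg[OF assms] .
  have B0: "B \<ge> 0" unfolding B_def using diag_nonneg[OF assms(2,1)] assms(3) by auto
  have s0: "s2 \<ge> 0" unfolding s2_def by simp
  have q: "\<And>t. t\<^sup>2 * A - 2 * t * s2 + s2 * B \<ge> 0" unfolding A_def B_def s2_def using quad[OF assms] .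
  show ?thesis
  proof (cases "A = 0")
    case True
    have "0 \<le> (B + 1)\<^sup>2 * A - 2 * (B + 1) * s2 + s2 * B" using q .
    hence "s2 * (B + 2) \<le> 0" using True by (simp add: algebra_simps)
    hence "s2 \<le> 0" using B0 by (simp add: mult_le_0_iff)
    thus ?thesis unfolding s2_def[symmetric] A_def[symmetric] B_def[symmetric] using True by simp
  next
    case False
    hence Ap: "A > 0" using A0 by simp
    have "0 \<le> (s2 / A)\<^sup>2 * A - 2 * (s2 / A) * s2 + s2 * B" using q .
    also have "(s2 / A)\<^sup>2 * A - 2 * (s2 / A) * s2 + s2 * B = s2 * (A * B - s2) / A"
      using Ap by (simp add: field_simps power2_eq_square)
    finally have "0 \<le> s2 * (A * B - s2)" using Ap by (simp add: zero_le_divide_iff)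
    hence "s2 = 0 \<or> s2 \<le> A * B" using s0 by (auto simp: zero_le_mult_iff)
    thus ?thesis unfolding s2_def[symmetric] A_def[symmetric] B_def[symmetric] using A0 B0 by auto
  qed
qed

end

context psd_ctx begin

lemma frob_bound:
  assumes "d \<ge> 2"
  shows "(\<Sum>a<d. \<Sum>b<d. (cmod (\<sigma> $$ (a, b)))\<^sup>2) \<le> (\<Sum>a<d. Re (\<sigma> $$ (a, a)))\<^sup>2"
proof -
  have b: "(cmod (\<sigma> $$ (a, b)))\<^sup>2 \<le> Re (\<sigma> $$ (a, a)) * Re (\<sigma> $$ (b, b))" if "a < d" "b < d" for a b
  proof (cases "a = b")
    case True
    have "cnj (\<sigma> $$ (a, a)) = \<sigma> $$ (a, a)" using diag_real[OF that(1)] .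
    hence "(Re (\<sigma> $$ (a, a)))\<^sup>2 = (cmod (\<sigma> $$ (a, a)))\<^sup>2" by (rule Re_sq_real)
    thus ?thesis using True by (simp add: power2_eq_square)
  next
    case False thus ?thesis using offdiag_bound[OF that False] by simp
  qed
  have "(\<Sum>a<d. \<Sum>b<d. (cmod (\<sigma> $$ (a, b)))\<^sup>2) \<le> (\<Sum>a<d. \<Sum>b<d. Re (\<sigma> $$ (a, a)) * Re (\<sigma> $$ (b, b)))"
    by (intro sum_mono) (use b in auto)
  also have "\<dots> = (\<Sum>a<d. Re (\<sigma> $$ (a, a)))\<^sup>2"
    by (simp add: power2_eq_square sum_product)
  finally show ?thesis .
qed

end

lemma log_bound:
  fixes P :: "nat \<Rightarrow> real"
  assumes pos: "\<And>j. j \<le> d \<Longrightarrow> P j > 0" and s: "(\<Sum>j\<le>d. P j) \<le> 2"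
  shows "- (\<Sum>j\<le>d. log 2 (P j)) \<ge> (real d + 1) * log 2 ((real d + 1) / 2)"
proof -
  define c where "c = (real d + 1) / 2"
  have c0: "c > 0" unfolding c_def by simp
  have each: "ln (P j) + ln c \<le> P j * c - 1" if "j \<le> d" for j
  proof -
    have "ln (P j * c) \<le> P j * c - 1" using pos[OF that] c0 by (intro ln_le_minus_one) simp
    thus ?thesis using pos[OF that] c0 by (simp add: ln_mult)
  qed
  have "(\<Sum>j\<le>d. ln (P j) + ln c) \<le> (\<Sum>j\<le>d. P j * c - 1)" by (intro sum_mono each) simp
  hence "(\<Sum>j\<le>d. ln (P j)) + (real d + 1) * ln c \<le> c * (\<Sum>j\<le>d. P j) - (real d + 1)"
    by (simp add: sum.distrib sum_subtractf sum_distrib_left algebra_simps)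
  also have "c * (\<Sum>j\<le>d. P j) - (real d + 1) \<le> c * 2 - (real d + 1)"
    using s c0 by (simp add: mult_left_mono)
  also have "c * 2 - (real d + 1) = 0" unfolding c_def by simp
  finally have "(\<Sum>j\<le>d. ln (P j)) \<le> - ((real d + 1) * ln c)" by simp
  hence "(\<Sum>j\<le>d. ln (P j)) / ln 2 \<le> - ((real d + 1) * ln c) / ln 2"
    by (rule divide_right_mono) simp
  moreover have "(\<Sum>j\<le>d. log 2 (P j)) = (\<Sum>j\<le>d. ln (P j)) / ln 2"
    unfolding log_def by (simp add: sum_divide_distrib)
  moreover have "(real d + 1) * log 2 c = (real d + 1) * ln c / ln 2" unfolding log_def by simp
  ultimately show ?thesis unfolding c_def by simp
qed

lemma herm_entry:
  assumes "hermitian_op d \<sigma>" "a < d" "b < d"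
  shows "\<sigma> $$ (b, a) = cnj (\<sigma> $$ (a, b))"
proof -
  have c: "\<sigma> \<in> carrier_mat d d" and e: "adjoint_op \<sigma> = \<sigma>" using assms(1) unfolding hermitian_op_def by auto
  have "\<sigma> $$ (b, a) = adjoint_op \<sigma> $$ (b, a)" using e by simp
  also have "\<dots> = cnj (\<sigma> $$ (a, b))" unfolding adjoint_op_def using c assms by simp
  finally show ?thesis .
qed

lemma density_psd: "density_op d \<sigma> \<Longrightarrow> psd_ctx d \<sigma>"
  unfolding psd_ctx_def density_op_def using herm_entry hermitian_op_def by blast

lemma density_trace: "density_op d \<sigma> \<Longrightarrow> (\<Sum>a<d. \<sigma> $$ (a, a)) = 1"
  unfolding density_op_def hermitian_op_def mtrace_def by auto

lemma purity_QQ: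
  assumes "odd d" "\<sigma> \<in> carrier_mat d d" "\<And>a b. a < d \<Longrightarrow> b < d \<Longrightarrow> \<sigma> $$ (b, a) = cnj (\<sigma> $$ (a, b))" "j \<le> d"
  shows "purity_sum d \<sigma> j = (\<Sum>k<d. (cmod (QQ d \<sigma> j k))\<^sup>2)"
  unfolding purity_sum_def
  by (intro sum.cong refl) (simp add: mub_prob_QQ[OF assms(1,2,4)] Re_sq_real[OF QQ_real[OF assms(3)]])

lemma purity_lt:
  assumes "prime d" "odd d" "\<sigma> \<in> carrier_mat d d" "\<And>a b. a < d \<Longrightarrow> b < d \<Longrightarrow> \<sigma> $$ (b, a) = cnj (\<sigma> $$ (a, b))" "j < d"
  shows "purity_sum d \<sigma> j = (1 / real d) * (\<Sum>t<d. (cmod (SS d \<sigma> j t))\<^sup>2)"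
  using purity_QQ[OF assms(2,3,4)] QQ_parseval[OF assms(1,5)] assms(5) by simp

lemma purity_d:
  assumes "odd d" "\<sigma> \<in> carrier_mat d d" "\<And>a b. a < d \<Longrightarrow> b < d \<Longrightarrow> \<sigma> $$ (b, a) = cnj (\<sigma> $$ (a, b))"
  shows "purity_sum d \<sigma> d = (\<Sum>k<d. (cmod (\<sigma> $$ (k, k)))\<^sup>2)"
proof -
  have "purity_sum d \<sigma> d = (\<Sum>k<d. (cmod (QQ d \<sigma> d k))\<^sup>2)" using purity_QQ[OF assms, of d] by simp
  also have "\<dots> = (\<Sum>k<d. (cmod (\<sigma> $$ (k, k)))\<^sup>2)" by (intro sum.cong refl) (simp add: QQ_d)
  finally show ?thesis .
qed

lemma purity_total:
  assumes "prime d" "odd d" "\<sigma> \<in> carrier_mat d d" "\<And>a b. a < d \<Longrightarrow> b < d \<Longrightarrow> \<sigma> $$ (b, a) = cnj (\<sigma> $$ (a, b))"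
  shows "(\<Sum>j\<le>d. purity_sum d \<sigma> j) = (cmod (\<Sum>a<d. \<sigma> $$ (a, a)))\<^sup>2 + (\<Sum>a<d. \<Sum>b<d. (cmod (\<sigma> $$ (a, b)))\<^sup>2)"
proof -
  have "(\<Sum>j\<le>d. purity_sum d \<sigma> j) = (\<Sum>j<d. purity_sum d \<sigma> j) + purity_sum d \<sigma> d"
    by (simp add: lessThan_Suc_atMost[symmetric])
  also have "(\<Sum>j<d. purity_sum d \<sigma> j) = (\<Sum>j<d. \<Sum>k<d. (cmod (QQ d \<sigma> j k))\<^sup>2)"
    using purity_QQ[OF assms(2,3,4)] by simp
  also have "\<dots> = (cmod (\<Sum>a<d. \<sigma> $$ (a, a)))\<^sup>2 + (\<Sum>a<d. \<Sum>b<d. (cmod (\<sigma> $$ (a, b)))\<^sup>2) - (\<Sum>a<d. (cmod (\<sigma> $$ (a, a)))\<^sup>2)"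
    by (rule sum_j_QQ[OF assms(1,2)])
  finally show ?thesis using purity_d[OF assms(2,3,4)] by simp
qed

lemma part_a:
  assumes "prime d" "odd d" "density_op d \<sigma>"
  shows "T_defined d \<sigma> \<and> total_renyi d \<sigma> \<ge> (real d + 1) * log 2 ((real d + 1) / 2)"
proof -
  interpret psd_ctx d \<sigma> using density_psd[OF assms(3)] .
  have d2: "d \<ge> 2" using prime_ge_2_nat[OF assms(1)] .
  have d0: "d > 0" using d2 by simp
  have tr: "(\<Sum>a<d. \<sigma> $$ (a, a)) = 1" using density_trace[OF assms(3)] .
  have trR: "(\<Sum>a<d. Re (\<sigma> $$ (a, a))) = 1" using arg_cong[OF tr, of Re] by (simp add: Re_sum)
  have pos: "purity_sum d \<sigma> j > 0" if "j \<le> d" for j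
  proof (cases "j = d")
    case True
    obtain k where k: "k < d" "\<sigma> $$ (k, k) \<noteq> 0"
    proof (rule ccontr)
      assume "\<not> thesis"
      hence "\<forall>k<d. \<sigma> $$ (k, k) = 0" using that by blast
      hence "(\<Sum>a<d. \<sigma> $$ (a, a)) = 0" by simp
      thus False using tr by simp
    qed
    have "0 < (cmod (\<sigma> $$ (k, k)))\<^sup>2" using k by simp
    also have "\<dots> \<le> (\<Sum>k<d. (cmod (\<sigma> $$ (k, k)))\<^sup>2)"
      by (rule member_le_sum) (use k in auto)
    finally show ?thesis using True purity_d[OF assms(2) car herm] by simp
  next
    case False
    hence j: "j < d" using that by simp
    have "(cmod (SS d \<sigma> j 0))\<^sup>2 \<le> (\<Sum>t<d. (cmod (SS d \<sigma> j t))\<^sup>2)"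
      by (rule member_le_sum) (use d0 in auto)
    moreover have "(cmod (SS d \<sigma> j 0))\<^sup>2 = 1" unfolding SS_zero tr by simp
    ultimately have "(\<Sum>t<d. (cmod (SS d \<sigma> j t))\<^sup>2) > 0" by simp
    thus ?thesis using purity_lt[OF assms(1,2) car herm j] d0 by simp
  qed
  have s: "(\<Sum>j\<le>d. purity_sum d \<sigma> j) \<le> 2"
  proof -
    have "(\<Sum>j\<le>d. purity_sum d \<sigma> j) = 1 + (\<Sum>a<d. \<Sum>b<d. (cmod (\<sigma> $$ (a, b)))\<^sup>2)"
      using purity_total[OF assms(1,2) car herm] tr by simp
    also have "\<dots> \<le> 1 + 1" using frob_bound[OF d2] trR by simp
    finally show ?thesis by simp
  qed
  show ?thesis
    unfolding T_defined_def total_renyi_def using pos log_bound[of d "purity_sum d \<sigma>"] s by auto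
qed

lemma expval_Dop:
  assumes "odd d" "\<phi> \<in> carrier_vec d"
  shows "expval \<phi> (Dop d p1 p2) = W d (hh d * int p1 * int p2) *
           (\<Sum>b<d. W d (int p2 * int b) * (\<phi> $ b * cnj (\<phi> $ ((b + p1) mod d))))"
proof -
  have d0: "d > 0" using assms by (simp add: odd_pos)
  have dv: "dim_vec \<phi> = d" using assms by simp
  have "expval \<phi> (Dop d p1 p2) = (\<Sum>a<d. \<Sum>b<d. cnj (\<phi> $ a) * Dop d p1 p2 $$ (a, b) * \<phi> $ b)"
    unfolding expval_def dv ..
  also have "\<dots> = (\<Sum>b<d. \<Sum>a<d. cnj (\<phi> $ a) * Dop d p1 p2 $$ (a, b) * \<phi> $ b)" by (rule sum.swap)
  also have "\<dots> = (\<Sum>b<d. \<Sum>a<d. if a = (b + p1) mod d then cnj (\<phi> $ a) * W d (hh d * int p1 * int p2 + int p2 * int b) * \<phi> $ b else 0)"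
    by (intro sum.cong refl) (simp add: Dop_entry[OF assms(1)] hh_def)
  also have "\<dots> = (\<Sum>b<d. cnj (\<phi> $ ((b + p1) mod d)) * W d (hh d * int p1 * int p2 + int p2 * int b) * \<phi> $ b)"
    using d0 by (intro sum.cong refl) (simp add: sum.delta')
  also have "\<dots> = (\<Sum>b<d. W d (hh d * int p1 * int p2) * (W d (int p2 * int b) * (\<phi> $ b * cnj (\<phi> $ ((b + p1) mod d)))))"
    by (intro sum.cong refl) (simp add: W_add mult_ac)
  also have "\<dots> = W d (hh d * int p1 * int p2) * (\<Sum>b<d. W d (int p2 * int b) * (\<phi> $ b * cnj (\<phi> $ ((b + p1) mod d))))"
    by (simp add: sum_distrib_left)
  finally show ?thesis .
qed

lemma cmod_expval_Dop:
  assumes "odd d" "\<phi> \<in> carrier_vec d"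
  shows "cmod (expval \<phi> (Dop d p1 p2)) = cmod (\<Sum>b<d. W d (int p2 * int b) * (\<phi> $ b * cnj (\<phi> $ ((b + p1) mod d))))"
  unfolding expval_Dop[OF assms] by (simp add: norm_mult)

lemma outer_carrier: "\<phi> \<in> carrier_vec d \<Longrightarrow> outer \<phi> \<in> carrier_mat d d"
  unfolding outer_def by simp

lemma outer_entry: "\<phi> \<in> carrier_vec d \<Longrightarrow> a < d \<Longrightarrow> b < d \<Longrightarrow> outer \<phi> $$ (a, b) = \<phi> $ a * cnj (\<phi> $ b)"
  unfolding outer_def by simp

lemma outer_herm: "\<phi> \<in> carrier_vec d \<Longrightarrow> a < d \<Longrightarrow> b < d \<Longrightarrow> outer \<phi> $$ (b, a) = cnj (outer \<phi> $$ (a, b))"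
  by (simp add: outer_entry)

lemma cmod_sq_eq': "z * cnj z = (complex_of_real (cmod z))\<^sup>2"
  using cmod_sq_eq[of z] by simp

lemma outer_trace:
  assumes "\<phi> \<in> carrier_vec d" "vnorm2 \<phi> = 1"
  shows "(\<Sum>a<d. outer \<phi> $$ (a, a)) = 1"
proof -
  have "(\<Sum>a<d. outer \<phi> $$ (a, a)) = (\<Sum>a<d. complex_of_real ((cmod (\<phi> $ a))\<^sup>2))"
    by (intro sum.cong refl) (simp add: outer_entry[OF assms(1)] cmod_sq_eq')
  also have "\<dots> = complex_of_real (vnorm2 \<phi>)" unfolding vnorm2_def using assms(1) by simp
  finally show ?thesis using assms(2) by simp
qed

lemma fid_unpack:
  assumes "fiducial d \<phi>"
  shows "\<phi> \<in> carrier_vec d" "vnorm2 \<phi> = 1"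
    "\<And>p1 p2. p1 < d \<Longrightarrow> p2 < d \<Longrightarrow> (p1, p2) \<noteq> (0, 0) \<Longrightarrow> (cmod (expval \<phi> (Dop d p1 p2)))\<^sup>2 = 1 / (real d + 1)"
  using assms unfolding fiducial_def by auto

lemma fid_SS:
  assumes "prime d" "odd d" "fiducial d \<phi>" "j < d" "0 < t" "t < d"
  shows "(cmod (SS d (outer \<phi>) j t))\<^sup>2 = 1 / (real d + 1)"
proof -
  note f = fid_unpack[OF assms(3)]
  have d0: "d > 0" using assms odd_pos by blast
  have "cmod (SS d (outer \<phi>) j t) = cmod (\<Sum>a<d. W d (int j * int t * int a) * (\<phi> $ a * cnj (\<phi> $ ((a + t) mod d))))"
    unfolding SS_abs[OF assms(2)] using d0 by (simp add: outer_entry[OF f(1)])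
  also have "\<dots> = cmod (\<Sum>b<d. W d (int ((j * t) mod d) * int b) * (\<phi> $ b * cnj (\<phi> $ ((b + t) mod d))))"
  proof -
    have "W d (int ((j * t) mod d) * int b) = W d (int j * int t * int b)" for b
    proof (rule W_cong[OF d0])
      have "(int ((j * t) mod d) * int b) mod int d = ((int j * int t) mod int d * int b) mod int d"
        by (simp add: of_nat_mod)
      also have "\<dots> = (int j * int t * int b) mod int d" by (simp add: mod_mult_left_eq)
      finally show "(int ((j * t) mod d) * int b) mod int d = (int j * int t * int b) mod int d" .
    qed
    thus ?thesis by simp
  qed
  also have "\<dots> = cmod (expval \<phi> (Dop d t ((j * t) mod d)))"
    unfolding cmod_expval_Dop[OF assms(2) f(1)] ..
  finally have "(cmod (SS d (outer \<phi>) j t))\<^sup>2 = (cmod (expval \<phi> (Dop d t ((j * t) mod d))))\<^sup>2" by simp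
  also have "\<dots> = 1 / (real d + 1)" using f(3)[of t "(j * t) mod d"] assms d0 by simp
  finally show ?thesis .
qed

lemma sum_first_rest:
  fixes f :: "nat \<Rightarrow> real"
  assumes "d > 0" "\<And>t. 0 < t \<Longrightarrow> t < d \<Longrightarrow> f t = c"
  shows "(\<Sum>t<d. f t) = f 0 + (real d - 1) * c"
proof -
  obtain m where m: "d = Suc m" using assms(1) gr0_implies_Suc by blast
  have "(\<Sum>t<d. f t) = f 0 + (\<Sum>t<m. f (Suc t))" unfolding m by (rule sum.lessThan_Suc_shift)
  also have "(\<Sum>t<m. f (Suc t)) = (\<Sum>t<m. c)" using assms(2) m by (intro sum.cong refl) simp
  finally show ?thesis using m by simp
qed

lemma two_over: "d > 0 \<Longrightarrow> (1 / real d) * (1 + (real d - 1) * (1 / (real d + 1))) = 2 / (real d + 1)"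
  by (simp add: field_simps)

lemma fid_purity_lt:
  assumes "prime d" "odd d" "fiducial d \<phi>" "j < d"
  shows "purity_sum d (outer \<phi>) j = 2 / (real d + 1)"
proof -
  note f = fid_unpack[OF assms(3)]
  have d0: "d > 0" using assms odd_pos by blast
  have "purity_sum d (outer \<phi>) j = (1 / real d) * (\<Sum>t<d. (cmod (SS d (outer \<phi>) j t))\<^sup>2)"
    using purity_lt[OF assms(1,2) outer_carrier[OF f(1)] outer_herm[OF f(1)] assms(4)] .
  also have "(\<Sum>t<d. (cmod (SS d (outer \<phi>) j t))\<^sup>2) = (cmod (SS d (outer \<phi>) j 0))\<^sup>2 + (real d - 1) * (1 / (real d + 1))"
    by (rule sum_first_rest[OF d0 fid_SS[OF assms]])
  also have "(cmod (SS d (outer \<phi>) j 0))\<^sup>2 = 1" unfolding SS_zero outer_trace[OF f(1,2)] by simp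
  finally show ?thesis using two_over[OF d0] by simp
qed

lemma fid_purity_d:
  assumes "prime d" "odd d" "fiducial d \<phi>"
  shows "purity_sum d (outer \<phi>) d = 2 / (real d + 1)"
proof -
  note f = fid_unpack[OF assms(3)]
  have d0: "d > 0" using assms odd_pos by blast
  define x where "x = (\<lambda>b. \<phi> $ b * cnj (\<phi> $ b))"
  have nd: "\<not> int d dvd 1" using prime_gt_1_nat[OF assms(1)] by simp
  have P: "(\<Sum>p<d. (cmod (\<Sum>b<d. W d (int p * 1 * int b) * x b))\<^sup>2) = real d * (\<Sum>b<d. (cmod (x b))\<^sup>2)"
    by (rule parseval[OF assms(1) nd])
  have "(\<Sum>p<d. (cmod (\<Sum>b<d. W d (int p * 1 * int b) * x b))\<^sup>2) =
      (cmod (\<Sum>b<d. W d (int 0 * 1 * int b) * x b))\<^sup>2 + (real d - 1) * (1 / (real d + 1))"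
  proof (rule sum_first_rest[OF d0])
    fix p assume p: "0 < p" "p < d"
    have "cmod (\<Sum>b<d. W d (int p * 1 * int b) * x b) = cmod (expval \<phi> (Dop d 0 p))"
      unfolding cmod_expval_Dop[OF assms(2) f(1)] x_def using d0 by simp
    thus "(cmod (\<Sum>b<d. W d (int p * 1 * int b) * x b))\<^sup>2 = 1 / (real d + 1)"
      using f(3)[of 0 p] p d0 by simp
  qed
  also have "(\<Sum>b<d. W d (int 0 * 1 * int b) * x b) = 1"
    using outer_trace[OF f(1,2)] unfolding x_def by (simp add: outer_entry[OF f(1)])
  finally have E: "real d * (\<Sum>b<d. (cmod (x b))\<^sup>2) = 1 + (real d - 1) * (1 / (real d + 1))" using P by simp
  have "(\<Sum>b<d. (cmod (x b))\<^sup>2) = (1 / real d) * (real d * (\<Sum>b<d. (cmod (x b))\<^sup>2))" using d0 by simp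
  also have "\<dots> = 2 / (real d + 1)" unfolding E by (rule two_over[OF d0])
  finally have "(\<Sum>b<d. (cmod (x b))\<^sup>2) = 2 / (real d + 1)" .
  moreover have "purity_sum d (outer \<phi>) d = (\<Sum>b<d. (cmod (x b))\<^sup>2)"
  proof -
    have "purity_sum d (outer \<phi>) d = (\<Sum>k<d. (cmod (outer \<phi> $$ (k, k)))\<^sup>2)"
      by (rule purity_d[OF assms(2) outer_carrier[OF f(1)] outer_herm[OF f(1)]])
    also have "\<dots> = (\<Sum>b<d. (cmod (x b))\<^sup>2)"
      unfolding x_def by (intro sum.cong refl) (simp add: outer_entry[OF f(1)])
    finally show ?thesis .
  qed
  ultimately show ?thesis by simp
qed

lemma part_c:
  assumes "prime d" "odd d" "fiducial d \<phi>"
  shows "T_defined d (outer \<phi>) \<and> total_renyi d (outer \<phi>) = (real d + 1) * log 2 ((real d + 1) / 2)"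
proof -
  have p: "purity_sum d (outer \<phi>) j = 2 / (real d + 1)" if "j \<le> d" for j
  proof (cases "j = d")
    case True thus ?thesis using fid_purity_d[OF assms] by simp
  next
    case False thus ?thesis using fid_purity_lt[OF assms] that by simp
  qed
  have "total_renyi d (outer \<phi>) = - (\<Sum>j\<le>d. log 2 (2 / (real d + 1)))"
    unfolding total_renyi_def using p by simp
  also have "\<dots> = (real d + 1) * log 2 ((real d + 1) / 2)"
    by (simp add: log_divide algebra_simps)
  finally show ?thesis unfolding T_defined_def using p by simp
qed

lemma gauss_sq:
  assumes "prime d" "\<not> int d dvd (2 * A)"
  shows "(cmod (\<Sum>a<d. W d (A * int a ^ 2 + B * int a)))\<^sup>2 = real d"
proof -
  have d0: "d > 0" using assms prime_gt_0_nat by blast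
  define F where "F = (\<lambda>a::nat. A * int a ^ 2 + B * int a)"
  have shift: "W d (F ((b + t) mod d) - F b) = W d (A * int t ^ 2 + B * int t) * W d (int b * (2 * A * int t))" for b t
  proof -
    define q where "q = int ((b + t) div d)"
    have m: "int ((b + t) mod d) = int b + int t - int d * q"
    proof -
      have "b + t = (b + t) mod d + d * ((b + t) div d)" by simp
      hence "int (b + t) = int ((b + t) mod d) + int d * q" unfolding q_def by (metis of_nat_add of_nat_mult)
      thus ?thesis by simp
    qed
    have "W d (F ((b + t) mod d) - F b) = W d (A * int t ^ 2 + B * int t + int b * (2 * A * int t))"
    proof (rule W_dvd_eq[OF d0])
      show "F ((b + t) mod d) - F b - (A * int t ^ 2 + B * int t + int b * (2 * A * int t))
          = int d * (A * (- 2 * (int b + int t) * q + int d * q * q) - B * q)"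
        unfolding F_def m by (simp add: algebra_simps power2_eq_square)
    qed
    also have "\<dots> = W d (A * int t ^ 2 + B * int t) * W d (int b * (2 * A * int t))" by (rule W_add)
    finally show ?thesis .
  qed
  have "complex_of_real ((cmod (\<Sum>a<d. W d (F a)))\<^sup>2) = (\<Sum>a<d. W d (F a)) * cnj (\<Sum>b<d. W d (F b))"
    by (rule cmod_sq_eq)
  also have "\<dots> = (\<Sum>a<d. \<Sum>b<d. W d (F a) * cnj (W d (F b)))"
    unfolding cnj_sum sum_product ..
  also have "\<dots> = (\<Sum>b<d. \<Sum>a<d. W d (F a - F b))"
    unfolding W_diff by (rule sum.swap)
  also have "\<dots> = (\<Sum>b<d. \<Sum>t<d. W d (F ((b + t) mod d) - F b))"
  proof (rule sum.cong[OF refl])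
    fix b assume "b \<in> {..<d}"
    thus "(\<Sum>a<d. W d (F a - F b)) = (\<Sum>t<d. W d (F ((b + t) mod d) - F b))"
      using sum_shift_mod[of b d "\<lambda>a. W d (F a - F b)"] by simp
  qed
  also have "\<dots> = (\<Sum>b<d. \<Sum>t<d. W d (A * int t ^ 2 + B * int t) * W d (int b * (2 * A * int t)))"
    unfolding shift ..
  also have "\<dots> = (\<Sum>t<d. W d (A * int t ^ 2 + B * int t) * (\<Sum>b<d. W d (int b * (2 * A * int t))))"
    unfolding sum_distrib_left by (rule sum.swap)
  also have "\<dots> = (\<Sum>t<d. if t = 0 then of_nat d else 0)"
  proof (rule sum.cong[OF refl])
    fix t assume "t \<in> {..<d}"
    hence t: "t < d" by simp
    have "int d dvd (2 * A * int t) \<longleftrightarrow> t = 0"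
      using prime_int_dvd_mult_small[OF assms(1,2) t, of 0] d0 by simp
    thus "W d (A * int t ^ 2 + B * int t) * (\<Sum>b<d. W d (int b * (2 * A * int t))) = (if t = 0 then of_nat d else 0)"
      unfolding W_sum[OF d0] by simp
  qed
  also have "\<dots> = of_nat d" using d0 by (simp add: sum.delta)
  finally show ?thesis unfolding F_def by (metis of_real_of_nat_eq of_real_eq_iff)
qed

definition IP :: "nat \<Rightarrow> complex vec \<Rightarrow> complex vec \<Rightarrow> complex" where
  "IP d u v = (\<Sum>a<d. u $ a * cnj (v $ a))"

lemma ev_prod:
  assumes "j < d" "j' < d" "a < d"
  shows "ev d j k $ a * cnj (ev d j' k' $ a) = complex_of_real (1 / real d) *
          W d ((hh d * (int j - int j')) * int a ^ 2 + (int k' - int k) * int a)"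
proof -
  have "ev d j k $ a * cnj (ev d j' k' $ a) = complex_of_real (1 / sqrt (real d)) * complex_of_real (1 / sqrt (real d)) *
          (W d (EE d j k a) * cnj (W d (EE d j' k' a)))"
    unfolding ev_entry[OF assms(1,3)] ev_entry[OF assms(2,3)] by (simp add: mult_ac)
  also have "complex_of_real (1 / sqrt (real d)) * complex_of_real (1 / sqrt (real d)) = complex_of_real (1 / real d)"
    by (simp flip: of_real_mult add: real_sqrt_mult[symmetric])
  also have "W d (EE d j k a) * cnj (W d (EE d j' k' a)) = W d ((hh d * (int j - int j')) * int a ^ 2 + (int k' - int k) * int a)"
    unfolding W_diff[symmetric] EE_def by (simp add: algebra_simps)
  finally show ?thesis .
qed

lemma ov_same:
  assumes "prime d" "j < d" "k < d" "k' < d"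
  shows "(cmod (IP d (ev d j k) (ev d j k')))\<^sup>2 = (if k = k' then 1 else 0)"
proof -
  have d0: "d > 0" using assms by simp
  have "IP d (ev d j k) (ev d j k') = complex_of_real (1 / real d) * (\<Sum>a<d. W d (int a * (int k' - int k)))"
    unfolding IP_def sum_distrib_left using ev_prod[OF assms(2) assms(2)]
    by (intro sum.cong refl) (simp add: mult.commute)
  also have "(\<Sum>a<d. W d (int a * (int k' - int k))) = (if int d dvd (int k' - int k) then of_nat d else 0)"
    by (rule W_sum[OF d0])
  also have "(int d dvd (int k' - int k)) = (k' = k)" using dvd_diff_small[OF assms(4,3)] by auto
  finally show ?thesis using d0 by auto
qed

lemma ov_diff:
  assumes "prime d" "odd d" "j < d" "j' < d" "j \<noteq> j'"
  shows "(cmod (IP d (ev d j k) (ev d j' k')))\<^sup>2 = 1 / real d"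
proof -
  have d0: "d > 0" using assms by simp
  let ?A = "hh d * (int j - int j')"
  have nd: "\<not> int d dvd (2 * ?A)"
  proof
    assume "int d dvd (2 * ?A)"
    moreover have "2 * ?A = int d * (int j - int j') + (int j - int j')"
      unfolding hh_odd[OF assms(2)] by (simp add: algebra_simps)
    ultimately have "int d dvd (int j - int j')" by (metis dvd_add_right_iff dvd_triv_left)
    thus False using dvd_diff_small[OF assms(3,4)] assms(5) by simp
  qed
  have "IP d (ev d j k) (ev d j' k') = complex_of_real (1 / real d) * (\<Sum>a<d. W d (?A * int a ^ 2 + (int k' - int k) * int a))"
    unfolding IP_def sum_distrib_left using ev_prod[OF assms(3,4)] by (intro sum.cong refl) simp
  hence "(cmod (IP d (ev d j k) (ev d j' k')))\<^sup>2 = (1 / real d)\<^sup>2 * (cmod (\<Sum>a<d. W d (?A * int a ^ 2 + (int k' - int k) * int a)))\<^sup>2"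
    by (simp add: norm_divide power_divide)
  also have "\<dots> = (1 / real d)\<^sup>2 * real d" unfolding gauss_sq[OF assms(1) nd] ..
  also have "\<dots> = 1 / real d" using d0 by (simp add: power2_eq_square)
  finally show ?thesis .
qed

lemma ov_dd:
  assumes "k < d" "k' < d"
  shows "(cmod (IP d (ev d d k) (ev d d k')))\<^sup>2 = (if k = k' then 1 else 0)"
proof -
  have "IP d (ev d d k) (ev d d k') = (\<Sum>a<d. if a = k then (if k = k' then 1 else 0) else 0)"
    unfolding IP_def by (intro sum.cong refl) (auto simp: ev_entry_d)
  also have "\<dots> = (if k = k' then 1 else 0)" using assms by (simp add: sum.delta)
  finally show ?thesis by simp
qed

lemma ov_d1:
  assumes "j < d" "k < d" "k' < d"
  shows "(cmod (IP d (ev d d k) (ev d j k')))\<^sup>2 = 1 / real d"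
proof -
  have "IP d (ev d d k) (ev d j k') = (\<Sum>a<d. if a = k then cnj (ev d j k' $ a) else 0)"
    unfolding IP_def by (intro sum.cong refl) (auto simp: ev_entry_d)
  also have "\<dots> = cnj (ev d j k' $ k)" using assms by (simp add: sum.delta)
  finally show ?thesis using assms by (simp add: ev_entry norm_mult norm_divide power_divide)
qed

lemma ov_d2:
  assumes "j < d" "k < d" "k' < d"
  shows "(cmod (IP d (ev d j k) (ev d d k')))\<^sup>2 = 1 / real d"
proof -
  have "IP d (ev d j k) (ev d d k') = (\<Sum>a<d. if a = k' then ev d j k $ a else 0)"
    unfolding IP_def by (intro sum.cong refl) (auto simp: ev_entry_d)
  also have "\<dots> = ev d j k $ k'" using assms by (simp add: sum.delta)
  finally show ?thesis using assms by (simp add: ev_entry norm_mult norm_divide power_divide)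
qed

lemma ov_all:
  assumes "prime d" "odd d" "j \<le> d" "j' \<le> d" "k < d" "k' < d"
  shows "(cmod (IP d (ev d j k) (ev d j' k')))\<^sup>2 = (if j = j' then (if k = k' then 1 else 0) else 1 / real d)"
proof (cases "j = d")
  case True
  show ?thesis
  proof (cases "j' = d")
    case True2: True thus ?thesis using True ov_dd[OF assms(5,6)] by simp
  next
    case False thus ?thesis using True ov_d1[of j' d k k'] assms by simp
  qed
next
  case False
  show ?thesis
  proof (cases "j' = d")
    case True thus ?thesis using False ov_d2[of j d k k'] assms by simp
  next
    case False2: False
    show ?thesis
    proof (cases "j = j'")
      case True thus ?thesis using ov_same[OF assms(1), of j k k'] assms False by simp
    next
      case False3: False thus ?thesis using ov_diff[OF assms(1,2), of j j' k k'] assms False False2 by simp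
    qed
  qed
qed

lemma op_add: "omega_pow d (x + y) = omega_pow d x * omega_pow d y"
  unfolding omega_pow_def by (simp add: exp_add[symmetric] add_divide_distrib distrib_left)

lemma op_nat: "omega_pow d (real n) = W d (int n)"
  unfolding omega_pow_def W_def by simp

lemma op_cis: "omega_pow d x = cis (2 * pi * x / real d)"
  unfolding omega_pow_def cis_conv_exp by (simp add: field_simps)

lemma op_norm[simp]: "cmod (omega_pow d x) = 1"
  unfolding op_cis by simp

lemma op_cnj: "cnj (omega_pow d x) = omega_pow d (- x)"
  unfolding op_cis by (simp add: cis_cnj)

lemma ar_two: "(x::real) > 0 \<Longrightarrow> x * (1 / x ^ 2 + (x - 1) / (x ^ 2 * (x + 1))) = 2 / (x + 1)"
proof -
  assume x: "x > 0"
  have p: "x * x > 0" using x by simp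
  have q: "x * (x * x) > 0" using x p by simp
  have n1: "x + 1 \<noteq> 0" "x \<noteq> 0" "x * x + x * (x * x) \<noteq> 0" "x + x * x \<noteq> 0"
    using x p q by linarith+
  show ?thesis using n1 by (simp add: field_simps power2_eq_square)
qed

lemma sum_split0:
  fixes d :: nat
  assumes "d > 0"
  shows "(\<Sum>r<d. f r) = f 0 + (\<Sum>r = 1..d - 1. f r)"
proof -
  obtain m where m: "d = Suc m" using assms gr0_implies_Suc by blast
  have "(\<Sum>r<d. f r) = f 0 + (\<Sum>r<m. f (Suc r))" unfolding m by (rule sum.lessThan_Suc_shift)
  also have "(\<Sum>r<m. f (Suc r)) = (\<Sum>r = 1..m. f r)" by (rule sum_bounds_lt_plus1)
  finally show ?thesis using m by simp
qed

definition yy :: "nat \<Rightarrow> (nat \<Rightarrow> nat \<Rightarrow> real) \<Rightarrow> nat \<Rightarrow> nat \<Rightarrow> complex" where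
  "yy d \<alpha> j r = (if r = 0 then 1 / of_nat d
      else 1 / (complex_of_nat d * complex_of_real (sqrt (real d + 1))) * omega_pow d (\<alpha> j r))"

lemma pcoef_four:
  assumes "d > 0"
  shows "pcoef d \<alpha> j k = (\<Sum>r<d. W d (int k * 1 * int r) * yy d \<alpha> j r)"
proof -
  have "(\<Sum>r<d. W d (int k * 1 * int r) * yy d \<alpha> j r) =
      W d (int k * 1 * int 0) * yy d \<alpha> j 0 + (\<Sum>r = 1..d - 1. W d (int k * 1 * int r) * yy d \<alpha> j r)"
    by (rule sum_split0[OF assms])
  also have "(\<Sum>r = 1..d - 1. W d (int k * 1 * int r) * yy d \<alpha> j r) =
     1 / (complex_of_nat d * complex_of_real (sqrt (real d + 1))) * (\<Sum>r = 1..d - 1. omega_pow d (\<alpha> j r + real (k * r)))"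
    unfolding sum_distrib_left
  proof (intro sum.cong refl)
    fix r assume "r \<in> {1..d - 1}"
    hence r: "r \<noteq> 0" by simp
    show "W d (int k * 1 * int r) * yy d \<alpha> j r =
        1 / (complex_of_nat d * complex_of_real (sqrt (real d + 1))) * omega_pow d (\<alpha> j r + real (k * r))"
      unfolding yy_def op_add op_nat using r by (simp add: mult_ac)
  qed
  finally show ?thesis unfolding pcoef_def yy_def by simp
qed

lemma pcoef_sum:
  assumes "prime d"
  shows "(\<Sum>k<d. pcoef d \<alpha> j k) = 1"
proof -
  have d0: "d > 0" using assms prime_gt_0_nat by blast
  have "(\<Sum>k<d. pcoef d \<alpha> j k) = (\<Sum>r<d. yy d \<alpha> j r * (\<Sum>k<d. W d (int k * int r)))"
  proof -
    have "(\<Sum>k<d. pcoef d \<alpha> j k) = (\<Sum>k<d. \<Sum>r<d. W d (int k * int r) * yy d \<alpha> j r)"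
      unfolding pcoef_four[OF d0] by simp
    also have "\<dots> = (\<Sum>r<d. \<Sum>k<d. W d (int k * int r) * yy d \<alpha> j r)" by (rule sum.swap)
    also have "\<dots> = (\<Sum>r<d. yy d \<alpha> j r * (\<Sum>k<d. W d (int k * int r)))"
      unfolding sum_distrib_left by (simp only: mult.commute)
    finally show ?thesis .
  qed
  also have "\<dots> = (\<Sum>r<d. if r = 0 then yy d \<alpha> j r * of_nat d else 0)"
  proof (intro sum.cong refl)
    fix r assume "r \<in> {..<d}"
    hence r: "r < d" by simp
    have "(int d dvd int r) = (r = 0)" using dvd_diff_small[OF r d0] by auto
    thus "yy d \<alpha> j r * (\<Sum>k<d. W d (int k * int r)) = (if r = 0 then yy d \<alpha> j r * of_nat d else 0)"
      unfolding W_sum[OF d0] by simp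
  qed
  also have "\<dots> = 1" using d0 by (simp add: yy_def)
  finally show ?thesis .
qed

lemma pcoef_sq:
  assumes "prime d"
  shows "(\<Sum>k<d. (cmod (pcoef d \<alpha> j k))\<^sup>2) = 2 / (real d + 1)"
proof -
  have d0: "d > 0" using assms prime_gt_0_nat by blast
  have nd: "\<not> int d dvd 1" using prime_gt_1_nat[OF assms] by simp
  have "(\<Sum>k<d. (cmod (pcoef d \<alpha> j k))\<^sup>2) = real d * (\<Sum>r<d. (cmod (yy d \<alpha> j r))\<^sup>2)"
    unfolding pcoef_four[OF d0] by (rule parseval[OF assms nd])
  also have "(\<Sum>r<d. (cmod (yy d \<alpha> j r))\<^sup>2) = (cmod (yy d \<alpha> j 0))\<^sup>2 + (\<Sum>r = 1..d - 1. (cmod (yy d \<alpha> j r))\<^sup>2)"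
    by (rule sum_split0[OF d0])
  also have "(\<Sum>r = 1..d - 1. (cmod (yy d \<alpha> j r))\<^sup>2) = (\<Sum>r = 1..d - 1. 1 / (real d ^ 2 * (real d + 1)))"
  proof (intro sum.cong refl)
    fix r assume "r \<in> {1..d - 1}"
    hence r: "r \<noteq> 0" by simp
    have "cmod (complex_of_nat d * complex_of_real (sqrt (real d + 1))) = real d * sqrt (real d + 1)"
      by (simp add: norm_mult)
    thus "(cmod (yy d \<alpha> j r))\<^sup>2 = 1 / (real d ^ 2 * (real d + 1))"
      unfolding yy_def using r by (simp add: norm_mult norm_divide power_divide power_mult_distrib)
  qed
  also have "(cmod (yy d \<alpha> j 0))\<^sup>2 = 1 / real d ^ 2" unfolding yy_def by (simp add: norm_divide power_divide)
  finally have "(\<Sum>k<d. (cmod (pcoef d \<alpha> j k))\<^sup>2) = real d * (1 / real d ^ 2 + (real d - 1) / (real d ^ 2 * (real d + 1)))"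
    using d0 by (simp add: of_nat_diff)
  also have "\<dots> = 2 / (real d + 1)" using d0 by (intro ar_two) simp
  finally show ?thesis .
qed

lemma pcoef_real:
  assumes "d > 0" "\<forall>r\<in>{1..d-1}. \<alpha> j (d - r) = - \<alpha> j r"
  shows "cnj (pcoef d \<alpha> j k) = pcoef d \<alpha> j k"
proof -
  let ?C = "1 / (complex_of_nat d * complex_of_real (sqrt (real d + 1)))"
  have cC: "cnj ?C = ?C" by simp
  have "(\<Sum>r = 1..d - 1. cnj (omega_pow d (\<alpha> j r + real (k * r)))) = (\<Sum>r = 1..d - 1. omega_pow d (- (\<alpha> j r + real (k * r))))"
    by (simp add: op_cnj)
  also have "\<dots> = (\<Sum>r = 1..d - 1. omega_pow d (- (\<alpha> j (d - 1 + 1 - r) + real (k * (d - 1 + 1 - r)))))"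
    by (rule sum.atLeastAtMost_rev)
  also have "\<dots> = (\<Sum>r = 1..d - 1. omega_pow d (\<alpha> j r + real (k * r)))"
  proof (intro sum.cong refl)
    fix r assume r: "r \<in> {1..d - 1}"
    have e1: "d - 1 + 1 - r = d - r" using assms(1) by simp
    have e2: "real (k * (d - r)) = real (k * d) - real (k * r)" proof -
      have "r \<le> d" using r by auto
      hence "real (d - r) = real d - real r" by (simp add: of_nat_diff)
      thus ?thesis by (simp add: right_diff_distrib)
    qed
    have E: "- (\<alpha> j (d - r) + real (k * (d - r))) = (\<alpha> j r + real (k * r)) + real_of_int (- int (k * d))"
      using assms(2) r e2 by simp
    have one: "omega_pow d (real_of_int (- int (k * d))) = 1"
      unfolding omega_pow_def using W_dvd[OF assms(1), of "- int (k * d)"] unfolding W_def by simp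
    have "omega_pow d (- (\<alpha> j (d - r) + real (k * (d - r)))) = omega_pow d ((\<alpha> j r + real (k * r)) + real_of_int (- int (k * d)))"
      unfolding E ..
    also have "\<dots> = omega_pow d (\<alpha> j r + real (k * r))" unfolding op_add[of d "\<alpha> j r + real (k * r)"] one by simp
    finally show "omega_pow d (- (\<alpha> j (d - 1 + 1 - r) + real (k * (d - 1 + 1 - r)))) = omega_pow d (\<alpha> j r + real (k * r))"
      unfolding e1 .
  qed
  finally have "(\<Sum>r = 1..d - 1. cnj (omega_pow d (\<alpha> j r + real (k * r)))) = (\<Sum>r = 1..d - 1. omega_pow d (\<alpha> j r + real (k * r)))" .
  thus ?thesis unfolding pcoef_def by (simp add: cnj_sum)
qed

lemma pcoef_purity:
  assumes "prime d" "\<forall>r\<in>{1..d-1}. \<alpha> j (d - r) = - \<alpha> j r"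
  shows "(\<Sum>k<d. (Re (pcoef d \<alpha> j k))\<^sup>2) = 2 / (real d + 1)"
proof -
  have d0: "d > 0" using assms prime_gt_0_nat by blast
  have "(\<Sum>k<d. (Re (pcoef d \<alpha> j k))\<^sup>2) = (\<Sum>k<d. (cmod (pcoef d \<alpha> j k))\<^sup>2)"
    using Re_sq_real pcoef_real[of d \<alpha> j, OF d0 assms(2)] by simp
  thus ?thesis using pcoef_sq[OF assms(1)] by simp
qed

lemma sum4_swap:
  "(\<Sum>a\<in>A. \<Sum>b\<in>B. \<Sum>j\<in>J. \<Sum>k\<in>K. f a b j k) = (\<Sum>j\<in>J. \<Sum>k\<in>K. \<Sum>a\<in>A. \<Sum>b\<in>B. (f a b j k :: complex))"
proof -
  have "(\<Sum>a\<in>A. \<Sum>b\<in>B. \<Sum>j\<in>J. \<Sum>k\<in>K. f a b j k) = (\<Sum>a\<in>A. \<Sum>j\<in>J. \<Sum>b\<in>B. \<Sum>k\<in>K. f a b j k)"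
    by (rule sum.cong[OF refl], rule sum.swap)
  also have "\<dots> = (\<Sum>j\<in>J. \<Sum>a\<in>A. \<Sum>b\<in>B. \<Sum>k\<in>K. f a b j k)" by (rule sum.swap)
  also have "\<dots> = (\<Sum>j\<in>J. \<Sum>a\<in>A. \<Sum>k\<in>K. \<Sum>b\<in>B. f a b j k)"
    by (rule sum.cong[OF refl], rule sum.cong[OF refl], rule sum.swap)
  also have "\<dots> = (\<Sum>j\<in>J. \<Sum>k\<in>K. \<Sum>a\<in>A. \<Sum>b\<in>B. f a b j k)"
    by (rule sum.cong[OF refl], rule sum.swap)
  finally show ?thesis .
qed

lemma QQ_comb:
  fixes cf :: "nat \<Rightarrow> nat \<Rightarrow> complex"
  assumes "odd d" "j' \<le> d" "k' < d"
  defines "\<rho> \<equiv> mat d d (\<lambda>(a, b). \<Sum>j\<le>d. \<Sum>k<d. cf j k * mub_proj d j k $$ (a, b))"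
  shows "QQ d \<rho> j' k' = (\<Sum>j\<le>d. \<Sum>k<d. cf j k * complex_of_real ((cmod (IP d (ev d j k) (ev d j' k')))\<^sup>2))"
proof -
  let ?u = "\<lambda>j k. ev d j k" and ?v = "ev d j' k'"
  have "QQ d \<rho> j' k' = (\<Sum>a<d. \<Sum>b<d. \<Sum>j\<le>d. \<Sum>k<d. cf j k * ((?u j k $ a * cnj (?v $ a)) * (cnj (?u j k $ b) * ?v $ b)))"
    unfolding QQ_def
  proof (intro sum.cong refl)
    fix a b assume ab: "a \<in> {..<d}" "b \<in> {..<d}"
    have "\<rho> $$ (a, b) = (\<Sum>j\<le>d. \<Sum>k<d. cf j k * (?u j k $ a * cnj (?u j k $ b)))"
      unfolding \<rho>_def using ab
      by (auto intro!: sum.cong simp: mub_proj_ev[OF assms(1)] outer_def)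
    hence "\<rho> $$ (a, b) * ?v $ b * cnj (?v $ a) = (\<Sum>j\<le>d. \<Sum>k<d. cf j k * (?u j k $ a * cnj (?u j k $ b))) * (?v $ b * cnj (?v $ a))"
      by (simp only: mult.assoc)
    also have "\<dots> = (\<Sum>j\<le>d. \<Sum>k<d. cf j k * (?u j k $ a * cnj (?u j k $ b)) * (?v $ b * cnj (?v $ a)))"
      by (simp only: sum_distrib_right)
    also have "\<dots> = (\<Sum>j\<le>d. \<Sum>k<d. cf j k * ((?u j k $ a * cnj (?v $ a)) * (cnj (?u j k $ b) * ?v $ b)))"
      by (intro sum.cong refl) (simp only: mult_ac)
    finally show "\<rho> $$ (a, b) * ?v $ b * cnj (?v $ a) =
        (\<Sum>j\<le>d. \<Sum>k<d. cf j k * ((?u j k $ a * cnj (?v $ a)) * (cnj (?u j k $ b) * ?v $ b)))" .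
  qed
  also have "\<dots> = (\<Sum>j\<le>d. \<Sum>k<d. \<Sum>a<d. \<Sum>b<d. cf j k * ((?u j k $ a * cnj (?v $ a)) * (cnj (?u j k $ b) * ?v $ b)))"
    by (rule sum4_swap)
  also have "\<dots> = (\<Sum>j\<le>d. \<Sum>k<d. cf j k * (IP d (?u j k) ?v * cnj (IP d (?u j k) ?v)))"
  proof (intro sum.cong refl)
    fix j k
    have "IP d (?u j k) ?v * cnj (IP d (?u j k) ?v) = (\<Sum>a<d. \<Sum>b<d. (?u j k $ a * cnj (?v $ a)) * (cnj (?u j k $ b) * ?v $ b))"
      unfolding IP_def cnj_sum complex_cnj_mult complex_cnj_cnj by (rule sum_product)
    thus "(\<Sum>a<d. \<Sum>b<d. cf j k * ((?u j k $ a * cnj (?v $ a)) * (cnj (?u j k $ b) * ?v $ b))) =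
        cf j k * (IP d (?u j k) ?v * cnj (IP d (?u j k) ?v))"
      by (simp only: sum_distrib_left)
  qed
  also have "\<dots> = (\<Sum>j\<le>d. \<Sum>k<d. cf j k * complex_of_real ((cmod (IP d (ev d j k) (ev d j' k')))\<^sup>2))"
    by (simp only: cmod_sq_eq)
  finally show ?thesis .
qed

lemma sum_if_const:
  assumes "j' \<le> d"
  shows "(\<Sum>j\<le>d. if j = j' then A else c0) = A + of_nat d * (c0 :: complex)"
proof -
  have "(\<Sum>j\<le>d. if j = j' then A else c0) = (\<Sum>j\<le>d. c0 + (if j = j' then A - c0 else 0))"
    by (intro sum.cong refl) simp
  also have "\<dots> = of_nat (Suc d) * c0 + (A - c0)" using assms by (simp add: sum.distrib)
  also have "\<dots> = A + of_nat d * c0" by (simp add: algebra_simps)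
  finally show ?thesis .
qed

lemma QQ_omega:
  fixes \<alpha> :: "nat \<Rightarrow> nat \<Rightarrow> real"
  assumes "prime d" "odd d" "j' \<le> d" "k' < d"
  defines "\<rho> \<equiv> mat d d (\<lambda>(a, b). \<Sum>j\<le>d. \<Sum>k<d. (pcoef d \<alpha> j k - 1 / (of_nat d + 1)) * mub_proj d j k $$ (a, b))"
  shows "QQ d \<rho> j' k' = pcoef d \<alpha> j' k'"
proof -
  have d0: "d > 0" using assms prime_gt_0_nat by blast
  define cf where "cf = (\<lambda>j k. pcoef d \<alpha> j k - 1 / (of_nat d + 1 :: complex))"
  define c0 where "c0 = 1 / of_nat d * (1 - of_nat d / (of_nat d + 1 :: complex))"
  have nz: "(of_nat d :: complex) \<noteq> 0" "(of_nat d + 1 :: complex) \<noteq> 0" using d0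
    by simp (metis of_nat_Suc of_nat_eq_0_iff nat.distinct(1) add.commute)
  have sumcf: "(\<Sum>k<d. cf j k) = 1 - of_nat d / (of_nat d + 1)" for j
    unfolding cf_def sum_subtractf pcoef_sum[OF assms(1)] by simp
  have "QQ d \<rho> j' k' = (\<Sum>j\<le>d. \<Sum>k<d. cf j k * complex_of_real ((cmod (IP d (ev d j k) (ev d j' k')))\<^sup>2))"
    unfolding \<rho>_def cf_def by (rule QQ_comb[OF assms(2,3,4)])
  also have "\<dots> = (\<Sum>j\<le>d. if j = j' then cf j' k' else c0)"
  proof (intro sum.cong refl)
    fix j assume "j \<in> {..d}"
    hence j: "j \<le> d" by simp
    show "(\<Sum>k<d. cf j k * complex_of_real ((cmod (IP d (ev d j k) (ev d j' k')))\<^sup>2)) = (if j = j' then cf j' k' else c0)"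
    proof (cases "j = j'")
      case True
      have "(\<Sum>k<d. cf j k * complex_of_real ((cmod (IP d (ev d j k) (ev d j' k')))\<^sup>2)) = (\<Sum>k<d. if k = k' then cf j k else 0)"
      proof (intro sum.cong refl)
        fix k assume "k \<in> {..<d}"
        hence k: "k < d" by simp
        have ov: "(cmod (IP d (ev d j k) (ev d j' k')))\<^sup>2 = (if j = j' then (if k = k' then 1 else 0) else 1 / real d)"
          by (rule ov_all[OF assms(1,2) j assms(3) k assms(4)])
        show "cf j k * complex_of_real ((cmod (IP d (ev d j k) (ev d j' k')))\<^sup>2) = (if k = k' then cf j k else 0)"
          unfolding ov using True by simp
      qed
      also have "\<dots> = cf j' k'" using assms(4) True by (simp add: sum.delta)
      finally show ?thesis using True by simp
    next
      case False
      have "(\<Sum>k<d. cf j k * complex_of_real ((cmod (IP d (ev d j k) (ev d j' k')))\<^sup>2)) = (\<Sum>k<d. cf j k * (1 / of_nat d))"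
      proof (intro sum.cong refl)
        fix k assume "k \<in> {..<d}"
        hence k: "k < d" by simp
        have ov: "(cmod (IP d (ev d j k) (ev d j' k')))\<^sup>2 = (if j = j' then (if k = k' then 1 else 0) else 1 / real d)"
          by (rule ov_all[OF assms(1,2) j assms(3) k assms(4)])
        show "cf j k * complex_of_real ((cmod (IP d (ev d j k) (ev d j' k')))\<^sup>2) = cf j k * (1 / of_nat d)"
          unfolding ov using False by simp
      qed
      also have "\<dots> = c0" unfolding sum_distrib_right[symmetric] sumcf c0_def by simp
      finally show ?thesis using False by simp
    qed
  qed
  also have "\<dots> = cf j' k' + of_nat d * c0" by (rule sum_if_const[OF assms(3)])
  also have "of_nat d * c0 = 1 / (of_nat d + 1)"
  proof -
    have nz3: "(of_nat d + of_nat d * of_nat d :: complex) \<noteq> 0"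
    proof -
      have a: "d + d * d \<noteq> 0" using d0 by simp
      have b: "(of_nat (d + d * d) :: complex) \<noteq> 0" using a by (metis of_nat_eq_0_iff)
      thus ?thesis by (simp only: of_nat_add of_nat_mult not_False_eq_True)
    qed
    show ?thesis unfolding c0_def using nz nz3 by (simp add: field_simps)
  qed
  finally show ?thesis unfolding cf_def by simp
qed

lemma part_b:
  assumes "prime d" "odd d" "\<rho> \<in> Omega d"
  shows "T_defined d \<rho> \<and> total_renyi d \<rho> = (real d + 1) * log 2 ((real d + 1) / 2)"
proof -
  obtain \<alpha> where anti: "\<forall>j\<le>d. \<forall>r\<in>{1..d-1}. \<alpha> j (d - r) = - \<alpha> j r"
    and rho: "\<rho> = mat d d (\<lambda>(a, b). \<Sum>j\<le>d. \<Sum>k<d. (pcoef d \<alpha> j k - 1 / (of_nat d + 1)) * mub_proj d j k $$ (a, b))"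
    using assms(3) unfolding Omega_def by blast
  have car: "\<rho> \<in> carrier_mat d d" unfolding rho by simp
  have p: "purity_sum d \<rho> j = 2 / (real d + 1)" if j: "j \<le> d" for j
  proof -
    have "purity_sum d \<rho> j = (\<Sum>k<d. (Re (pcoef d \<alpha> j k))\<^sup>2)"
      unfolding purity_sum_def
    proof (intro sum.cong refl)
      fix k assume "k \<in> {..<d}"
      hence k: "k < d" by simp
      have "mub_prob d \<rho> j k = Re (QQ d \<rho> j k)" by (rule mub_prob_QQ[OF assms(2) car j k])
      also have "QQ d \<rho> j k = pcoef d \<alpha> j k" unfolding rho by (rule QQ_omega[OF assms(1,2) j k])
      finally show "(mub_prob d \<rho> j k)\<^sup>2 = (Re (pcoef d \<alpha> j k))\<^sup>2" by simp
    qed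
    also have "\<dots> = 2 / (real d + 1)" using pcoef_purity[OF assms(1)] anti j by simp
    finally show ?thesis .
  qed
  have "total_renyi d \<rho> = - (\<Sum>j\<le>d. log 2 (2 / (real d + 1)))"
    unfolding total_renyi_def using p by simp
  also have "\<dots> = (real d + 1) * log 2 ((real d + 1) / 2)"
    by (simp add: log_divide algebra_simps)
  finally show ?thesis unfolding T_defined_def using p by simp
qed

theorem mainTheorem5:
  fixes d :: nat
  assumes "prime d" and "odd d"
  shows "(\<forall>\<sigma>. density_op d \<sigma> \<longrightarrow>
            T_defined d \<sigma> \<and>
            total_renyi d \<sigma> \<ge> (real d + 1) * log 2 ((real d + 1) / 2))
       \<and> (\<forall>\<rho> \<in> Omega d. T_defined d \<rho> \<and>
            total_renyi d \<rho> = (real d + 1) * log 2 ((real d + 1) / 2))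
       \<and> (\<forall>\<phi>. fiducial d \<phi> \<longrightarrow> T_defined d (outer \<phi>) \<and>
            total_renyi d (outer \<phi>) = (real d + 1) * log 2 ((real d + 1) / 2))"
  using part_a[OF assms] part_b[OF assms] part_c[OF assms] by blast

end
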